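(* With the notation below, let $D\in\mathrm{Div}(C_p)$ and let $f\in\mathcal K(C_p)$ be real-valued. (i) Put $D'=D+(f)$. For every integer $n\geq0$ with $\|f\|_p\leq p^n$, the map $\xi\mapsto\xi-f$ induces a bijection from $H^0(D)^{p^n}$ onto $H^0(D')^{p^n}$ (which is an isomorphism of $\mathbb{R}_{\max}$-modules). (ii) For every integer $n\geq0$, the map $F_{p^n}:\xi\mapsto p^n\xi$ is a bijection $H^0(D)^{p^n}\to H^0(p^nD)^1$ which is an isomorphism of $\mathbb{R}_{\max}$-modules twisted by the automorphism $x\mapsto p^nx$ of $\mathbb{R}_{\max}$ (i.e. it preserves $\vee$ and $F_{p^n}(\xi+a)=F_{p^n}(\xi)+p^na$), and it preserves the topological dimension.
   Context: Let $p$ be a prime, $H_p=\mathbb{Z}[1/p]$, $|\cdot|_p$ the $p$-adic absolute value with $|p|_p=1/p$. $\mathbb{R}_{\max}=\mathbb{R}\cup\{-\infty\}$ with operations $\max$ and $+$. $C_p$ is the set of subgroups $H=\lambda H_p\subset\mathbb{R}$, $\lambda>0$. $\mathcal K(C_p)$: continuous piecewise affine $f:(0,\infty)\to\mathbb{R}$ with slopes in $H_p$ and $f(p\lambda)=f(\lambda)$, plus the constant $-\infty$. For real-valued $f$ and $H=\lambda H_p$, $\mathrm{Ord}_H(f)=h_+-h_-$, $h_\pm=\lim_{\epsilon\to0\pm}(f((1+\epsilon)\lambda)-f(\lambda))/\epsilon$; $(f)(H)=\mathrm{Ord}_H(f)$. Divisors: maps $D$ with $D(H)\in H$, finitely supported,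 ordered pointwise, group $\mathrm{Div}(C_p)$. $H^0(D)=\{f\in\mathcal K(C_p)\text{ real-valued}\mid D+(f)\geq0\}\cup\{-\infty\}$, an $\mathbb{R}_{\max}$-module via max and addition of constants, topologized by $d(f,g)=\max_{x\in[1,p]}|f(x)-g(x)|$. $\|f\|_p=\max\{|h|_p/\lambda\}$ over $\lambda>0$ and $h$ the left/right slopes of $f$ at $\lambda$; $H^0(D)^\rho=\{f\in H^0(D)\mid\|f\|_p\leq\rho\}$ (containing $-\infty$). Topological dimension is the Lebesgue covering dimension. *)

theory Defs
  imports "HOL-Analysis.Analysis" "HOL-Computational_Algebra.Primes"
begin

definition Hp :: "nat \<Rightarrow> real set" where
  "Hp p = {of_int k / real p ^ m | k m. True}"

definition padic_abs :: "nat \<Rightarrow> real \<Rightarrow> real" where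
  "padic_abs p x = (if x = 0 then 0 else
     (SOME r. \<exists>k::int. \<exists>m::nat. k \<noteq> 0 \<and> x = of_int k / real p ^ m \<and>
        r = real p powr (real m - real (multiplicity (int p) k))))"

text \<open>C_p: the subgroups lambda H_p of R, lambda > 0 (points are subsets of R).\<close>
definition Cp :: "nat \<Rightarrow> real set set" where
  "Cp p = {(\<lambda>h. l * h) ` Hp p | l. l > 0}"

definition rep :: "nat \<Rightarrow> real set \<Rightarrow> real" where
  "rep p H = (SOME l. l > 0 \<and> H = (\<lambda>h. l * h) ` Hp p)"

definition pw_affine_Hp :: "nat \<Rightarrow> (real \<Rightarrow> real) \<Rightarrow> bool" where
  "pw_affine_Hp p f \<longleftrightarrow>
     continuous_on {0<..} f \<and>
     (\<forall>a b. 0 < a \<and> a < b \<longrightarrow>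
        (\<exists>xs::real list. sorted_wrt (<) xs \<and> xs \<noteq> [] \<and> hd xs = a \<and> last xs = b \<and>
           (\<forall>i. Suc i < length xs \<longrightarrow>
              (\<exists>s\<in>Hp p. \<exists>c. \<forall>x\<in>{xs ! i .. xs ! Suc i}. f x = s * x + c))))"

text \<open>Real-valued elements of K(C_p). Only the values on (0,oo) matter.\<close>
definition KCp :: "nat \<Rightarrow> (real \<Rightarrow> real) set" where
  "KCp p = {f. pw_affine_Hp p f \<and> (\<forall>x>0. f (real p * x) = f x)}"

text \<open>Ord_H(f) = h_+ - h_-.\<close>
definition Ord :: "nat \<Rightarrow> real set \<Rightarrow> (real \<Rightarrow> real) \<Rightarrow> real" where
  "Ord p H f = (let l = rep p H in
     Lim (at_right 0) (\<lambda>e. (f ((1 + e) * l) - f l) / e)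
   - Lim (at_left 0) (\<lambda>e. (f ((1 + e) * l) - f l) / e))"

text \<open>Principal divisor (f); divisors are maps real set => real, zero off C_p.\<close>
definition princ :: "nat \<Rightarrow> (real \<Rightarrow> real) \<Rightarrow> real set \<Rightarrow> real" where
  "princ p f H = (if H \<in> Cp p then Ord p H f else 0)"

definition is_Div :: "nat \<Rightarrow> (real set \<Rightarrow> real) \<Rightarrow> bool" where
  "is_Div p D \<longleftrightarrow> (\<forall>H. D H \<noteq> 0 \<longrightarrow> H \<in> Cp p) \<and> (\<forall>H\<in>Cp p. D H \<in> H)
      \<and> finite {H. D H \<noteq> 0}"

text \<open>Embedding of a real-valued function on (0,oo) into the R_max-valued
  functions; values at x <= 0 are normalised to -oo (they carry no information).\<close>
definition emb :: "(real \<Rightarrow> real) \<Rightarrow> real \<Rightarrow> ereal" where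
  "emb g = (\<lambda>x. if 0 < x then ereal (g x) else -\<infinity>)"

definition minf :: "real \<Rightarrow> ereal" where
  "minf = (\<lambda>x. -\<infinity>)"

definition H0 :: "nat \<Rightarrow> (real set \<Rightarrow> real) \<Rightarrow> (real \<Rightarrow> ereal) set" where
  "H0 p D = {emb g | g. g \<in> KCp p \<and> (\<forall>H. D H + princ p g H \<ge> 0)} \<union> {minf}"

definition left_slope :: "(real \<Rightarrow> real) \<Rightarrow> real \<Rightarrow> real" where
  "left_slope f l = Lim (at_left l) (\<lambda>x. (f x - f l) / (x - l))"

definition right_slope :: "(real \<Rightarrow> real) \<Rightarrow> real \<Rightarrow> real" where
  "right_slope f l = Lim (at_right l) (\<lambda>x. (f x - f l) / (x - l))"

definition pnorm :: "nat \<Rightarrow> (real \<Rightarrow> real) \<Rightarrow> real" where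
  "pnorm p f = Sup {padic_abs p h / l | l h. l > 0 \<and> (h = left_slope f l \<or> h = right_slope f l)}"

definition H0rho :: "nat \<Rightarrow> (real set \<Rightarrow> real) \<Rightarrow> real \<Rightarrow> (real \<Rightarrow> ereal) set" where
  "H0rho p D \<rho> = {\<xi> \<in> H0 p D. \<xi> = minf \<or> (\<exists>g\<in>KCp p. \<xi> = emb g \<and> pnorm p g \<le> \<rho>)}"

text \<open>Topology on a set S of R_max-valued functions induced by
  d(f,g) = max_{x in [1,p]} |f x - g x| (so -oo is an isolated point).\<close>
definition topH :: "nat \<Rightarrow> (real \<Rightarrow> ereal) set \<Rightarrow> (real \<Rightarrow> ereal) topology" where
  "topH p S = topology (\<lambda>U. U \<subseteq> S \<and> (\<forall>\<xi>\<in>U. \<exists>e>0. \<forall>\<eta>\<in>S.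
       (\<xi> = \<eta> \<or> (\<forall>x\<in>{1..real p}. \<bar>\<xi> x - \<eta> x\<bar> < ereal e)) \<longrightarrow> \<eta> \<in> U))"

definition cov_dim_le :: "'a topology \<Rightarrow> nat \<Rightarrow> bool" where
  "cov_dim_le X n \<longleftrightarrow>
     (\<forall>\<U>. finite \<U> \<and> (\<forall>U\<in>\<U>. openin X U) \<and> \<Union>\<U> = topspace X \<longrightarrow>
        (\<exists>\<V>. finite \<V> \<and> (\<forall>V\<in>\<V>. openin X V) \<and> \<Union>\<V> = topspace X \<and>
             (\<forall>V\<in>\<V>. \<exists>U\<in>\<U>. V \<subseteq> U) \<and>
             (\<forall>x\<in>topspace X. card {V\<in>\<V>. x \<in> V} \<le> n + 1)))"

definition covering_dim :: "'a topology \<Rightarrow> ereal" where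
  "covering_dim X = (if topspace X = {} then -1 else Inf {ereal (real n) | n. cov_dim_le X n})"

end

theory Submission
  imports Defs
begin


lemma Hp_mem: "of_int k / real p ^ m \<in> Hp p" unfolding Hp_def by blast

lemma Hp_elim: assumes "x \<in> Hp p" obtains k m where "x = of_int k / real p ^ m"
  using assms unfolding Hp_def by blast

lemma Hp_common:
  assumes "p > 0" "x \<in> Hp p" "y \<in> Hp p"
  obtains k k' m where "x = of_int k / real p ^ m" "y = of_int k' / real p ^ m"
proof -
  obtain k m where x: "x = of_int k / real p ^ m" using assms(2) by (rule Hp_elim)
  obtain k' m' where y: "y = of_int k' / real p ^ m'" using assms(3) by (rule Hp_elim)
  have "x = of_int (k * int p ^ m') / real p ^ (m + m')"
    using assms(1) by (simp add: x power_add)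
  moreover have "y = of_int (k' * int p ^ m) / real p ^ (m + m')"
    using assms(1) by (simp add: y power_add)
  ultimately show ?thesis using that by blast
qed

lemma Hp_add: assumes "p > 0" "x \<in> Hp p" "y \<in> Hp p" shows "x + y \<in> Hp p"
proof -
  obtain k k' m where "x = of_int k / real p ^ m" "y = of_int k' / real p ^ m"
    using assms by (rule Hp_common)
  then have "x + y = of_int (k + k') / real p ^ m" by (simp add: add_divide_distrib)
  then show ?thesis by (simp only: Hp_mem)
qed

lemma Hp_uminus: assumes "x \<in> Hp p" shows "- x \<in> Hp p"
proof -
  obtain k m where "x = of_int k / real p ^ m" using assms by (rule Hp_elim)
  then have "-x = of_int (-k) / real p ^ m" by simp
  then show ?thesis by (simp only: Hp_mem)
qed

lemma Hp_mult: assumes "x \<in> Hp p" "y \<in> Hp p" shows "x * y \<in> Hp p"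
proof -
  obtain k m where x: "x = of_int k / real p ^ m" using assms(1) by (rule Hp_elim)
  obtain k' m' where y: "y = of_int k' / real p ^ m'" using assms(2) by (rule Hp_elim)
  have "x * y = of_int (k * k') / real p ^ (m + m')" by (simp add: x y power_add)
  then show ?thesis by (simp only: Hp_mem)
qed

lemma Hp_int: "of_int k \<in> Hp p" using Hp_mem[of k p 0] by simp

lemma Hp_divp: assumes "x \<in> Hp p" shows "x / real p ^ n \<in> Hp p"
proof -
  obtain k m where "x = of_int k / real p ^ m" using assms by (rule Hp_elim)
  then have "x / real p ^ n = of_int k / real p ^ (m + n)" by (simp add: power_add)
  then show ?thesis by (simp only: Hp_mem)
qed

lemma Hp_powp: "real p ^ n \<in> Hp p"
  using Hp_int[of "int p ^ n" p] by simp

lemma Hp_inv_powp: "1 / real p ^ n \<in> Hp p"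
  using Hp_mem[of 1 p n] by simp

lemma Hp_0: "0 \<in> Hp p" using Hp_int[of 0 p] by simp
lemma Hp_1: "1 \<in> Hp p" using Hp_int[of 1 p] by simp



abbreviation vp :: "nat \<Rightarrow> int \<Rightarrow> nat" where "vp p k \<equiv> multiplicity (int p) k"

lemma vp_uminus: "vp p (- k) = vp p k"
proof -
  have "vp p (-k) = vp p (normalize (-k))" by (rule multiplicity_normalize_right[symmetric])
  also have "normalize (-k) = normalize k" by simp
  also have "vp p (normalize k) = vp p k" by (rule multiplicity_normalize_right)
  finally show ?thesis .
qed

lemma vp_well:
  assumes p: "prime p" and k: "k \<noteq> 0" "k' \<noteq> 0"
    and eq: "of_int k / real p ^ m = of_int k' / real p ^ m'"
  shows "real m - real (vp p k) = real m' - real (vp p k')"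
proof -
  have pe: "prime_elem (int p)" using p by (simp add: prime_nat_int_transfer)
  have p0: "real p > 0" using p prime_gt_0_nat by simp
  have "of_int k * real p ^ m' = of_int k' * real p ^ m"
    using eq p0 by (simp add: field_simps)
  then have "real_of_int (k * int p ^ m') = real_of_int (k' * int p ^ m)" by simp
  then have e: "k * int p ^ m' = k' * int p ^ m" by (simp only: of_int_eq_iff)
  have pn: "int p ^ j \<noteq> 0" for j using p0 by simp
  have "vp p (k * int p ^ m') = vp p k + m'"
    using pe k pn by (simp add: prime_elem_multiplicity_mult_distrib)
  moreover have "vp p (k' * int p ^ m) = vp p k' + m"
    using pe k pn by (simp add: prime_elem_multiplicity_mult_distrib)
  ultimately have "vp p k + m' = vp p k' + m" using e by simp
  then show ?thesis by linarith
qed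

lemma padic_abs_repr:
  assumes p: "prime p" and k: "k \<noteq> 0"
  shows "padic_abs p (of_int k / real p ^ m) = real p powr (real m - real (vp p k))"
proof -
  have p0: "real p > 0" using p prime_gt_0_nat by simp
  define x where "x = of_int k / real p ^ m"
  have x0: "x \<noteq> 0" using k p0 by (simp add: x_def)
  let ?P = "\<lambda>r. \<exists>k::int. \<exists>m::nat. k \<noteq> 0 \<and> x = of_int k / real p ^ m \<and>
        r = real p powr (real m - real (multiplicity (int p) k))"
  have ex: "\<exists>r. ?P r" using k x_def by blast
  obtain k' m' where k': "k' \<noteq> 0" "x = of_int k' / real p ^ m'"
     "(SOME r. ?P r) = real p powr (real m' - real (vp p k'))"
    using someI_ex[OF ex] by blast
  have "real m' - real (vp p k') = real m - real (vp p k)"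
    using vp_well[OF p k'(1) k] k'(2) x_def by simp
  then show ?thesis using x0 k'(3) unfolding padic_abs_def x_def[symmetric] by simp
qed

lemma padic_abs_0: "padic_abs p 0 = 0" by (simp add: padic_abs_def)

lemma padic_abs_nonneg: assumes "prime p" "x \<in> Hp p" shows "padic_abs p x \<ge> 0"
proof -
  obtain k m where x: "x = of_int k / real p ^ m" using assms(2) by (rule Hp_elim)
  show ?thesis
  proof (cases "k = 0")
    case True then show ?thesis by (simp add: x padic_abs_0)
  next
    case False then show ?thesis by (simp add: x padic_abs_repr[OF assms(1)])
  qed
qed

lemma padic_abs_uminus: assumes "prime p" "x \<in> Hp p" shows "padic_abs p (- x) = padic_abs p x"
proof -
  obtain k m where x: "x = of_int k / real p ^ m" using assms(2) by (rule Hp_elim)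
  show ?thesis
  proof (cases "k = 0")
    case True then show ?thesis by (simp add: x padic_abs_0)
  next
    case False
    have "-x = of_int (-k) / real p ^ m" by (simp add: x)
    then have "padic_abs p (-x) = real p powr (real m - real (vp p (-k)))"
      using padic_abs_repr[OF assms(1), of "-k" m] False by simp
    then show ?thesis using False by (simp add: x padic_abs_repr[OF assms(1)] vp_uminus)
  qed
qed

lemma padic_abs_add:
  assumes p: "prime p" and xy: "x \<in> Hp p" "y \<in> Hp p"
  shows "padic_abs p (x + y) \<le> max (padic_abs p x) (padic_abs p y)"
proof -
  have p0: "p > 0" using p prime_gt_0_nat by simp
  have p1: "real p > 1" using p prime_gt_1_nat by simp
  obtain k k' m where x: "x = of_int k / real p ^ m" and y: "y = of_int k' / real p ^ m"
    using p0 xy by (rule Hp_common)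
  have s: "x + y = of_int (k + k') / real p ^ m" by (simp add: x y add_divide_distrib)
  show ?thesis
  proof (cases "k = 0 \<or> k' = 0 \<or> k + k' = 0")
    case True
    then show ?thesis
    proof (elim disjE)
      assume "k = 0" then show ?thesis by (simp add: x y)
    next
      assume "k' = 0" then show ?thesis by (simp add: x y)
    next
      assume "k + k' = 0"
      then have "padic_abs p (x + y) = 0" by (simp add: s padic_abs_0)
      then show ?thesis using padic_abs_nonneg[OF p xy(1)] by simp
    qed
  next
    case False
    then have nz: "k \<noteq> 0" "k' \<noteq> 0" "k + k' \<noteq> 0" by auto
    define j where "j = min (vp p k) (vp p k')"
    have pe: "prime_elem (int p)" using p by (simp add: prime_nat_int_transfer)
    then have nu: "\<not> is_unit (int p)" by (rule prime_elem_not_unit)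
    have "int p ^ j dvd k" unfolding j_def by (rule multiplicity_dvd') simp
    moreover have "int p ^ j dvd k'" unfolding j_def by (rule multiplicity_dvd') simp
    ultimately have "int p ^ j dvd k + k'" by simp
    then have jle: "j \<le> vp p (k + k')" using multiplicity_geI[OF nz(3) nu] by blast
    have "padic_abs p (x + y) = real p powr (real m - real (vp p (k + k')))"
      using s padic_abs_repr[OF p nz(3)] by simp
    also have "\<dots> \<le> real p powr (real m - real j)"
      using jle p1 by (intro powr_mono) auto
    also have "\<dots> = max (padic_abs p x) (padic_abs p y)"
      using p1 by (auto simp: x y padic_abs_repr[OF p nz(1)] padic_abs_repr[OF p nz(2)] j_def
          min_def max_def)
    finally show ?thesis .
  qed
qed

lemma padic_abs_diff:
  assumes p: "prime p" and xy: "x \<in> Hp p" "y \<in> Hp p"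
  shows "padic_abs p (x - y) \<le> max (padic_abs p x) (padic_abs p y)"
  using padic_abs_add[OF p xy(1) Hp_uminus[OF xy(2)]] padic_abs_uminus[OF p xy(2)] by simp

lemma padic_abs_divp1:
  assumes p: "prime p" and x: "x \<in> Hp p"
  shows "padic_abs p (x / real p) = real p * padic_abs p x"
proof -
  have p0: "real p > 0" using p prime_gt_0_nat by simp
  obtain k m where xk: "x = of_int k / real p ^ m" using x by (rule Hp_elim)
  show ?thesis
  proof (cases "k = 0")
    case True then show ?thesis by (simp add: xk padic_abs_0)
  next
    case False
    have "x / real p = of_int k / real p ^ Suc m" by (simp add: xk)
    then have "padic_abs p (x / real p) = real p powr (real (Suc m) - real (vp p k))"
      using padic_abs_repr[OF p False, of "Suc m"] by simp
    also have "real (Suc m) - real (vp p k) = 1 + (real m - real (vp p k))" by simp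
    also have "real p powr (1 + (real m - real (vp p k))) = real p powr 1 * real p powr (real m - real (vp p k))"
      by (rule powr_add)
    finally show ?thesis using p0 by (simp add: xk padic_abs_repr[OF p False])
  qed
qed

lemma padic_abs_divpn:
  assumes p: "prime p" and x: "x \<in> Hp p"
  shows "padic_abs p (x / real p ^ n) = real p ^ n * padic_abs p x"
proof (induction n)
  case 0 then show ?case by simp
next
  case (Suc n)
  have eq: "x / real p ^ Suc n = (x / real p ^ n) / real p" by (simp add: field_simps)
  have "padic_abs p (x / real p ^ Suc n) = real p * padic_abs p (x / real p ^ n)"
    unfolding eq by (rule padic_abs_divp1[OF p Hp_divp[OF x]])
  then show ?case by (simp add: Suc.IH)
qed

lemma padic_abs_mulpn:
  assumes p: "prime p" and x: "x \<in> Hp p"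
  shows "padic_abs p (real p ^ n * x) = padic_abs p x / real p ^ n"
proof -
  have p0: "real p > 0" using p prime_gt_0_nat by simp
  have "padic_abs p ((real p ^ n * x) / real p ^ n) = real p ^ n * padic_abs p (real p ^ n * x)"
    by (rule padic_abs_divpn[OF p Hp_mult[OF Hp_powp x]])
  then show ?thesis using p0 by (simp add: field_simps)
qed



abbreviation aff :: "nat \<Rightarrow> (real \<Rightarrow> real) \<Rightarrow> real \<Rightarrow> real \<Rightarrow> bool" where
  "aff p g u v \<equiv> \<exists>s\<in>Hp p. \<exists>c. \<forall>x\<in>{u..v}. g x = s * x + c"

definition good :: "nat \<Rightarrow> (real \<Rightarrow> real) \<Rightarrow> real set \<Rightarrow> real \<Rightarrow> real \<Rightarrow> bool" where
  "good p g P a b \<longleftrightarrow> finite P \<and> P \<subseteq> {a..b} \<and> a \<in> P \<and> b \<in> P \<and>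
     (\<forall>u\<in>P. \<forall>v\<in>P. u < v \<and> {u<..<v} \<inter> P = {} \<longrightarrow> aff p g u v)"

lemma sw_idx_less:
  fixes xs :: "real list"
  assumes "sorted_wrt (<) xs" "i < length xs" "j < length xs" "xs ! i < xs ! j"
  shows "i < j"
proof (rule ccontr)
  assume "\<not> i < j"
  then have "j < i \<or> j = i" by auto
  then show False
  proof
    assume "j < i" then have "xs ! j < xs ! i" using sorted_wrt_nth_less assms by blast
    then show False using assms(4) by simp
  qed (use assms(4) in simp)
qed

lemma sw_bounds:
  fixes xs :: "real list"
  assumes "sorted_wrt (<) xs" "xs \<noteq> []" "x \<in> set xs"
  shows "hd xs \<le> x \<and> x \<le> last xs"
proof -
  obtain i where i: "i < length xs" "x = xs ! i" using assms(3) by (auto simp: in_set_conv_nth)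
  have "xs ! 0 \<le> xs ! i"
  proof (cases "i = 0")
    case False then show ?thesis using sorted_wrt_nth_less[OF assms(1), of 0 i] i by simp
  qed simp
  moreover have "xs ! i \<le> xs ! (length xs - 1)"
  proof (cases "i = length xs - 1")
    case False
    then have "i < length xs - 1" using i by simp
    moreover have "length xs - 1 < length xs" using i by simp
    ultimately show ?thesis using sorted_wrt_nth_less[OF assms(1), of i "length xs - 1"] by simp
  qed simp
  ultimately show ?thesis using i assms(2) by (simp add: hd_conv_nth last_conv_nth)
qed

lemma list_good:
  assumes sw: "sorted_wrt (<) xs" and ne: "xs \<noteq> []" and h: "hd xs = a" and l: "last xs = b"
    and pc: "\<forall>i. Suc i < length xs \<longrightarrow> aff p g (xs ! i) (xs ! Suc i)"
  shows "good p g (set xs) a b"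
  unfolding good_def
proof (intro conjI ballI impI)
  show "set xs \<subseteq> {a..b}" using sw_bounds[OF sw ne] h l by auto
  show "a \<in> set xs" using h ne hd_in_set by blast
  show "b \<in> set xs" using l ne last_in_set by blast
  fix u v assume u: "u \<in> set xs" and v: "v \<in> set xs" and uv: "u < v \<and> {u<..<v} \<inter> set xs = {}"
  obtain i where i: "i < length xs" "u = xs ! i" using u by (auto simp: in_set_conv_nth)
  obtain j where j: "j < length xs" "v = xs ! j" using v by (auto simp: in_set_conv_nth)
  have ij: "i < j" using sw_idx_less[OF sw i(1) j(1)] uv i j by simp
  have "j = Suc i"
  proof (rule ccontr)
    assume "j \<noteq> Suc i"
    then have "Suc i < j" using ij by simp
    then have "xs ! i < xs ! Suc i" "xs ! Suc i < xs ! j"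
      using sorted_wrt_nth_less[OF sw] j(1) by auto
    moreover have "xs ! Suc i \<in> set xs" using \<open>Suc i < j\<close> j(1) by simp
    ultimately show False using uv i j by auto
  qed
  then show "aff p g u v" using pc i j by simp
qed simp

lemma good_list:
  assumes g: "good p g P a b"
  shows "\<exists>xs. sorted_wrt (<) xs \<and> xs \<noteq> [] \<and> hd xs = a \<and> last xs = b \<and>
           (\<forall>i. Suc i < length xs \<longrightarrow> aff p g (xs ! i) (xs ! Suc i))"
proof -
  have fin: "finite P" and sub: "P \<subseteq> {a..b}" and aP: "a \<in> P" and bP: "b \<in> P"
    and pc: "\<And>u v. u \<in> P \<Longrightarrow> v \<in> P \<Longrightarrow> u < v \<Longrightarrow> {u<..<v} \<inter> P = {} \<Longrightarrow> aff p g u v"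
    using g unfolding good_def by auto
  define xs where "xs = sorted_list_of_set P"
  have sw: "sorted_wrt (<) xs" unfolding xs_def by (rule strict_sorted_list_of_set)
  have st: "set xs = P" unfolding xs_def using fin by simp
  have ne: "xs \<noteq> []" using st aP by auto
  have hd: "hd xs = a"
  proof -
    have "hd xs \<le> a" using sw_bounds[OF sw ne] aP st by auto
    moreover have "hd xs \<in> P" using st ne hd_in_set by blast
    ultimately show ?thesis using sub by auto
  qed
  have lst: "last xs = b"
  proof -
    have "b \<le> last xs" using sw_bounds[OF sw ne] bP st by auto
    moreover have "last xs \<in> P" using st ne last_in_set by blast
    ultimately show ?thesis using sub by auto
  qed
  have "aff p g (xs ! i) (xs ! Suc i)" if si: "Suc i < length xs" for i
  proof (rule pc)
    show "xs ! i \<in> P" "xs ! Suc i \<in> P" using si st nth_mem by auto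
    show "xs ! i < xs ! Suc i" using sorted_wrt_nth_less[OF sw] si by simp
    show "{xs ! i<..<xs ! Suc i} \<inter> P = {}"
    proof (rule ccontr)
      assume "{xs ! i<..<xs ! Suc i} \<inter> P \<noteq> {}"
      then obtain y where y: "y \<in> P" "xs ! i < y" "y < xs ! Suc i" by auto
      obtain j where j: "j < length xs" "y = xs ! j" using y(1) st by (auto simp: in_set_conv_nth)
      have "i < j" using sw_idx_less[OF sw _ j(1)] si y j by simp
      moreover have "j < Suc i" using sw_idx_less[OF sw j(1) si] y j by simp
      ultimately show False by simp
    qed
  qed
  then show ?thesis using sw ne hd lst by blast
qed

lemma good_aff:
  assumes g: "good p g P a b" and uv: "a \<le> u" "u < v" "v \<le> b" and emp: "{u<..<v} \<inter> P = {}"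
  shows "aff p g u v"
proof -
  have fin: "finite P" and sub: "P \<subseteq> {a..b}" and aP: "a \<in> P" and bP: "b \<in> P"
    and pc: "\<And>u v. u \<in> P \<Longrightarrow> v \<in> P \<Longrightarrow> u < v \<Longrightarrow> {u<..<v} \<inter> P = {} \<Longrightarrow> aff p g u v"
    using g unfolding good_def by auto
  define L where "L = {x\<in>P. x \<le> u}"
  define R where "R = {x\<in>P. v \<le> x}"
  have L: "finite L" "L \<noteq> {}" using fin aP uv unfolding L_def by auto
  have R: "finite R" "R \<noteq> {}" using fin bP uv unfolding R_def by auto
  define u' where "u' = Max L"
  define v' where "v' = Min R"
  have u'L: "u' \<in> L" unfolding u'_def using L by (rule Max_in)
  have v'R: "v' \<in> R" unfolding v'_def using R by (rule Min_in)
  have u'u: "u' \<le> u" and u'P: "u' \<in> P" using u'L L_def by auto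
  have vv': "v \<le> v'" and v'P: "v' \<in> P" using v'R R_def by auto
  have "{u'<..<v'} \<inter> P = {}"
  proof (rule ccontr)
    assume "{u'<..<v'} \<inter> P \<noteq> {}"
    then obtain y where y: "y \<in> P" "u' < y" "y < v'" by auto
    have "\<not> y \<le> u"
    proof
      assume "y \<le> u" then have "y \<in> L" using y L_def by simp
      then have "y \<le> u'" unfolding u'_def using L Max_ge by blast
      then show False using y by simp
    qed
    moreover have "\<not> v \<le> y"
    proof
      assume "v \<le> y" then have "y \<in> R" using y R_def by simp
      then have "v' \<le> y" unfolding v'_def using R Min_le by blast
      then show False using y by simp
    qed
    ultimately have "y \<in> {u<..<v} \<inter> P" using y by simp
    then show False using emp by simp
  qed
  then have "aff p g u' v'" using pc u'P v'P u'u vv' uv by simp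
  then show ?thesis using u'u vv' by fastforce
qed

lemma pw_good:
  assumes "pw_affine_Hp p g" "0 < a" "a < b"
  shows "\<exists>P. good p g P a b"
  using assms list_good unfolding pw_affine_Hp_def by blast

lemma good_pw:
  assumes "continuous_on {0<..} g" "\<And>a b. 0 < a \<Longrightarrow> a < b \<Longrightarrow> \<exists>P. good p g P a b"
  shows "pw_affine_Hp p g"
  unfolding pw_affine_Hp_def using assms good_list by blast

lemma loc_left:
  assumes "pw_affine_Hp p g" "0 < l"
  shows "\<exists>s\<in>Hp p. \<exists>c. \<exists>d>0. \<forall>x\<in>{l-d..l}. g x = s * x + c"
proof -
  obtain P where g: "good p g P (l/2) (2*l)" using pw_good assms by fastforce
  have fin: "finite P" and sub: "P \<subseteq> {l/2..2*l}" and aP: "l/2 \<in> P"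
    using g unfolding good_def by auto
  define L where "L = {x\<in>P. x < l}"
  have L: "finite L" "L \<noteq> {}" using fin aP assms(2) unfolding L_def by auto
  define u where "u = Max L"
  have "u \<in> L" unfolding u_def using L by (rule Max_in)
  then have uP: "u \<in> P" "u < l" using L_def by auto
  have ul: "l/2 \<le> u" using uP sub by auto
  have "{u<..<l} \<inter> P = {}"
  proof (rule ccontr)
    assume "{u<..<l} \<inter> P \<noteq> {}"
    then obtain y where y: "y \<in> P" "u < y" "y < l" by auto
    then have "y \<in> L" using L_def by simp
    then have "y \<le> u" unfolding u_def using L Max_ge by blast
    then show False using y by simp
  qed
  then have "aff p g u l" using good_aff[OF g ul uP(2)] assms(2) by simp
  then obtain s c where "s \<in> Hp p" "\<forall>x\<in>{u..l}. g x = s * x + c" by blast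
  moreover have "l - (l - u) = u" by simp
  ultimately show ?thesis using uP(2) by (intro bexI[of _ s] exI[of _ c] exI[of _ "l - u"]) auto
qed

lemma loc_right:
  assumes "pw_affine_Hp p g" "0 < l"
  shows "\<exists>s\<in>Hp p. \<exists>c. \<exists>d>0. \<forall>x\<in>{l..l+d}. g x = s * x + c"
proof -
  obtain P where g: "good p g P (l/2) (2*l)" using pw_good assms by fastforce
  have fin: "finite P" and sub: "P \<subseteq> {l/2..2*l}" and bP: "2*l \<in> P"
    using g unfolding good_def by auto
  define R where "R = {x\<in>P. l < x}"
  have R: "finite R" "R \<noteq> {}" using fin bP assms(2) unfolding R_def by auto
  define v where "v = Min R"
  have "v \<in> R" unfolding v_def using R by (rule Min_in)
  then have vP: "v \<in> P" "l < v" using R_def by auto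
  have vl: "v \<le> 2*l" using vP sub by auto
  have "{l<..<v} \<inter> P = {}"
  proof (rule ccontr)
    assume "{l<..<v} \<inter> P \<noteq> {}"
    then obtain y where y: "y \<in> P" "l < y" "y < v" by auto
    then have "y \<in> R" using R_def by simp
    then have "v \<le> y" unfolding v_def using R Min_le by blast
    then show False using y by simp
  qed
  then have "aff p g l v" using good_aff[OF g _ vP(2) vl] assms(2) by simp
  then obtain s c where "s \<in> Hp p" "\<forall>x\<in>{l..v}. g x = s * x + c" by blast
  moreover have "l + (v - l) = v" by simp
  ultimately show ?thesis using vP(2) by (intro bexI[of _ s] exI[of _ c] exI[of _ "v - l"]) auto
qed



lemma KCp_lc:
  assumes p: "prime p" and g: "g \<in> KCp p" and f: "f \<in> KCp p" and ab: "a \<in> Hp p" "b \<in> Hp p"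
  shows "(\<lambda>x. a * g x + b * f x) \<in> KCp p"
proof -
  have p0: "p > 0" using p prime_gt_0_nat by simp
  have pwg: "pw_affine_Hp p g" and pwf: "pw_affine_Hp p f"
    and pg: "\<And>x. x > 0 \<Longrightarrow> g (real p * x) = g x" and pf: "\<And>x. x > 0 \<Longrightarrow> f (real p * x) = f x"
    using g f unfolding KCp_def by auto
  have cg: "continuous_on {0<..} g" and cf: "continuous_on {0<..} f"
    using pwg pwf unfolding pw_affine_Hp_def by auto
  have "pw_affine_Hp p (\<lambda>x. a * g x + b * f x)"
  proof (rule good_pw)
    show "continuous_on {0<..} (\<lambda>x. a * g x + b * f x)"
      by (intro continuous_intros cg cf)
    fix a' b' :: real assume ab': "0 < a'" "a' < b'"
    obtain P where P: "good p g P a' b'" using pw_good[OF pwg ab'] by blast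
    obtain Q where Q: "good p f Q a' b'" using pw_good[OF pwf ab'] by blast
    have "good p (\<lambda>x. a * g x + b * f x) (P \<union> Q) a' b'"
      unfolding good_def
    proof (intro conjI ballI impI)
      show "finite (P \<union> Q)" "P \<union> Q \<subseteq> {a'..b'}" "a' \<in> P \<union> Q" "b' \<in> P \<union> Q"
        using P Q unfolding good_def by auto
      fix u v assume u: "u \<in> P \<union> Q" and v: "v \<in> P \<union> Q" and uv: "u < v \<and> {u<..<v} \<inter> (P \<union> Q) = {}"
      have uvr: "a' \<le> u" "v \<le> b'" using u v P Q unfolding good_def by auto
      have "aff p g u v" using good_aff[OF P uvr(1) _ uvr(2)] uv by auto
      then obtain s1 c1 where s1: "s1 \<in> Hp p" "\<forall>x\<in>{u..v}. g x = s1 * x + c1" by blast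
      have "aff p f u v" using good_aff[OF Q uvr(1) _ uvr(2)] uv by auto
      then obtain s2 c2 where s2: "s2 \<in> Hp p" "\<forall>x\<in>{u..v}. f x = s2 * x + c2" by blast
      have "a * s1 + b * s2 \<in> Hp p" using Hp_add[OF p0 Hp_mult[OF ab(1) s1(1)] Hp_mult[OF ab(2) s2(1)]] .
      moreover have "\<forall>x\<in>{u..v}. a * g x + b * f x = (a * s1 + b * s2) * x + (a * c1 + b * c2)"
        using s1(2) s2(2) by (simp add: algebra_simps)
      ultimately show "aff p (\<lambda>x. a * g x + b * f x) u v" by blast
    qed
    then show "\<exists>P. good p (\<lambda>x. a * g x + b * f x) P a' b'" by blast
  qed
  moreover have "\<forall>x>0. a * g (real p * x) + b * f (real p * x) = a * g x + b * f x"
    using pg pf by simp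
  ultimately show ?thesis unfolding KCp_def by simp
qed

lemma left_quot_loc:
  fixes g :: "real \<Rightarrow> real" and l d s c :: real
  assumes "d > 0" "\<forall>x\<in>{l-d..l}. g x = s * x + c"
  shows "((\<lambda>x. (g x - g l) / (x - l)) \<longlongrightarrow> s) (at_left l)"
proof (rule tendsto_eventually)
  have "eventually (\<lambda>x. x \<in> {l-d<..<l}) (at_left l)" using assms(1) by (intro eventually_at_left_real) simp
  then show "eventually (\<lambda>x. (g x - g l) / (x - l) = s) (at_left l)"
  proof (rule eventually_mono)
    fix x assume x: "x \<in> {l-d<..<l}"
    then have "g x = s * x + c" "g l = s * l + c" using assms by auto
    then have "g x - g l = s * (x - l)" by (simp add: algebra_simps)
    then show "(g x - g l) / (x - l) = s" using x by simp
  qed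
qed

lemma right_quot_loc:
  fixes g :: "real \<Rightarrow> real" and l d s c :: real
  assumes "d > 0" "\<forall>x\<in>{l..l+d}. g x = s * x + c"
  shows "((\<lambda>x. (g x - g l) / (x - l)) \<longlongrightarrow> s) (at_right l)"
proof (rule tendsto_eventually)
  have "eventually (\<lambda>x. x \<in> {l<..<l+d}) (at_right l)" using assms(1) by (intro eventually_at_right_real) simp
  then show "eventually (\<lambda>x. (g x - g l) / (x - l) = s) (at_right l)"
  proof (rule eventually_mono)
    fix x assume x: "x \<in> {l<..<l+d}"
    then have "g x = s * x + c" "g l = s * l + c" using assms by auto
    then have "g x - g l = s * (x - l)" by (simp add: algebra_simps)
    then show "(g x - g l) / (x - l) = s" using x by simp
  qed
qed

lemma ordR_loc:
  fixes g :: "real \<Rightarrow> real" and l d s c :: real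
  assumes "l > 0" "d > 0" "\<forall>x\<in>{l..l+d}. g x = s * x + c"
  shows "((\<lambda>e. (g ((1 + e) * l) - g l) / e) \<longlongrightarrow> s * l) (at_right 0)"
proof (rule tendsto_eventually)
  have "eventually (\<lambda>e. e \<in> {0<..<d/l}) (at_right (0::real))" using assms(1,2) by (intro eventually_at_right_real) simp
  then show "eventually (\<lambda>e. (g ((1 + e) * l) - g l) / e = s * l) (at_right 0)"
  proof (rule eventually_mono)
    fix e assume e: "e \<in> {0<..<d/l}"
    then have "e * l < d" using assms(1) by (simp add: field_simps)
    then have "(1 + e) * l \<in> {l..l+d}" using e assms(1) by (simp add: algebra_simps)
    then have "g ((1 + e) * l) = s * ((1 + e) * l) + c" "g l = s * l + c" using assms by auto
    then have "g ((1 + e) * l) - g l = s * l * e" by (simp add: algebra_simps)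
    then show "(g ((1 + e) * l) - g l) / e = s * l" using e by simp
  qed
qed

lemma ordL_loc:
  fixes g :: "real \<Rightarrow> real" and l d s c :: real
  assumes "l > 0" "d > 0" "\<forall>x\<in>{l-d..l}. g x = s * x + c"
  shows "((\<lambda>e. (g ((1 + e) * l) - g l) / e) \<longlongrightarrow> s * l) (at_left 0)"
proof (rule tendsto_eventually)
  have "eventually (\<lambda>e. e \<in> {-(d/l)<..<0}) (at_left (0::real))" using assms(1,2) by (intro eventually_at_left_real) simp
  then show "eventually (\<lambda>e. (g ((1 + e) * l) - g l) / e = s * l) (at_left 0)"
  proof (rule eventually_mono)
    fix e assume e: "e \<in> {-(d/l)<..<0}"
    then have "- (e * l) < d" using assms(1) by (simp add: field_simps)
    then have "(1 + e) * l \<in> {l-d..l}" using e assms(1) by (simp add: algebra_simps mult_nonpos_nonneg)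
    then have "g ((1 + e) * l) = s * ((1 + e) * l) + c" "g l = s * l + c" using assms by auto
    then have "g ((1 + e) * l) - g l = s * l * e" by (simp add: algebra_simps)
    then show "(g ((1 + e) * l) - g l) / e = s * l" using e by simp
  qed
qed

lemma Lim_lc:
  fixes f1 f2 :: "'a \<Rightarrow> real"
  assumes "F \<noteq> bot" "(f1 \<longlongrightarrow> L1) F" "(f2 \<longlongrightarrow> L2) F"
  shows "Lim F (\<lambda>x. a * f1 x + b * f2 x) = a * Lim F f1 + b * Lim F f2"
proof -
  have "((\<lambda>x. a * f1 x + b * f2 x) \<longlongrightarrow> a * L1 + b * L2) F"
    by (intro tendsto_add tendsto_mult_left assms)
  then show ?thesis using assms by (simp add: tendsto_Lim trivial_limit_def)
qed

definition QL :: "(real \<Rightarrow> real) \<Rightarrow> real \<Rightarrow> real \<Rightarrow> real" where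
  "QL g l = (\<lambda>x. (g x - g l) / (x - l))"
definition QO :: "(real \<Rightarrow> real) \<Rightarrow> real \<Rightarrow> real \<Rightarrow> real" where
  "QO g l = (\<lambda>e. (g ((1 + e) * l) - g l) / e)"

lemma QL_lc: "QL (\<lambda>x. a * g x + b * f x) l = (\<lambda>x. a * QL g l x + b * QL f l x)"
  unfolding QL_def by (rule ext) (simp add: field_simps diff_divide_distrib add_divide_distrib)
lemma QO_lc: "QO (\<lambda>x. a * g x + b * f x) l = (\<lambda>x. a * QO g l x + b * QO f l x)"
  unfolding QO_def by (rule ext) (simp add: field_simps diff_divide_distrib add_divide_distrib)

lemma KCp_pw: "g \<in> KCp p \<Longrightarrow> pw_affine_Hp p g" unfolding KCp_def by simp

lemma KCp_lims:
  assumes "g \<in> KCp p" "l > 0"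
  shows "\<exists>s\<in>Hp p. (QL g l \<longlongrightarrow> s) (at_left l) \<and> (QO g l \<longlongrightarrow> s * l) (at_left 0)"
    and "\<exists>s\<in>Hp p. (QL g l \<longlongrightarrow> s) (at_right l) \<and> (QO g l \<longlongrightarrow> s * l) (at_right 0)"
proof -
  obtain s c d where "s \<in> Hp p" "d > 0" "\<forall>x\<in>{l-d..l}. g x = s * x + c"
    using loc_left[OF KCp_pw[OF assms(1)] assms(2)] by blast
  then show "\<exists>s\<in>Hp p. (QL g l \<longlongrightarrow> s) (at_left l) \<and> (QO g l \<longlongrightarrow> s * l) (at_left 0)"
    unfolding QL_def QO_def using left_quot_loc ordL_loc assms(2) by blast
next
  obtain s c d where "s \<in> Hp p" "d > 0" "\<forall>x\<in>{l..l+d}. g x = s * x + c"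
    using loc_right[OF KCp_pw[OF assms(1)] assms(2)] by blast
  then show "\<exists>s\<in>Hp p. (QL g l \<longlongrightarrow> s) (at_right l) \<and> (QO g l \<longlongrightarrow> s * l) (at_right 0)"
    unfolding QL_def QO_def using right_quot_loc ordR_loc assms(2) by blast
qed

lemma left_slope_QL: "left_slope g l = Lim (at_left l) (QL g l)"
  unfolding left_slope_def QL_def ..
lemma right_slope_QL: "right_slope g l = Lim (at_right l) (QL g l)"
  unfolding right_slope_def QL_def ..

lemma left_slope_Hp: assumes "g \<in> KCp p" "l > 0" shows "left_slope g l \<in> Hp p"
proof -
  obtain s where "s \<in> Hp p" "(QL g l \<longlongrightarrow> s) (at_left l)" using KCp_lims(1)[OF assms] by blast
  then show ?thesis by (simp add: left_slope_QL tendsto_Lim)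
qed
lemma right_slope_Hp: assumes "g \<in> KCp p" "l > 0" shows "right_slope g l \<in> Hp p"
proof -
  obtain s where "s \<in> Hp p" "(QL g l \<longlongrightarrow> s) (at_right l)" using KCp_lims(2)[OF assms] by blast
  then show ?thesis by (simp add: right_slope_QL tendsto_Lim)
qed

lemma left_slope_lc:
  assumes "g \<in> KCp p" "f \<in> KCp p" "l > 0"
  shows "left_slope (\<lambda>x. a * g x + b * f x) l = a * left_slope g l + b * left_slope f l"
  using KCp_lims(1)[OF assms(1,3)] KCp_lims(1)[OF assms(2,3)]
  unfolding left_slope_QL QL_lc by (auto intro: Lim_lc)

lemma right_slope_lc:
  assumes "g \<in> KCp p" "f \<in> KCp p" "l > 0"
  shows "right_slope (\<lambda>x. a * g x + b * f x) l = a * right_slope g l + b * right_slope f l"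
  using KCp_lims(2)[OF assms(1,3)] KCp_lims(2)[OF assms(2,3)]
  unfolding right_slope_QL QL_lc by (auto intro: Lim_lc)

lemma rep_pos: "H \<in> Cp p \<Longrightarrow> rep p H > 0"
  unfolding Cp_def rep_def by (auto intro: someI2_ex)

lemma princ_lc:
  assumes "g \<in> KCp p" "f \<in> KCp p"
  shows "princ p (\<lambda>x. a * g x + b * f x) H = a * princ p g H + b * princ p f H"
proof (cases "H \<in> Cp p")
  case True
  define l where "l = rep p H"
  have l: "l > 0" using rep_pos[OF True] l_def by simp
  have Ord: "Ord p H h = Lim (at_right 0) (QO h l) - Lim (at_left 0) (QO h l)" for h
    unfolding Ord_def QO_def l_def Let_def ..
  have "Lim (at_right 0) (QO (\<lambda>x. a * g x + b * f x) l) = a * Lim (at_right 0) (QO g l) + b * Lim (at_right 0) (QO f l)"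
    using KCp_lims(2)[OF assms(1) l] KCp_lims(2)[OF assms(2) l] unfolding QO_lc by (auto intro: Lim_lc)
  moreover have "Lim (at_left 0) (QO (\<lambda>x. a * g x + b * f x) l) = a * Lim (at_left 0) (QO g l) + b * Lim (at_left 0) (QO f l)"
    using KCp_lims(1)[OF assms(1) l] KCp_lims(1)[OF assms(2) l] unfolding QO_lc by (auto intro: Lim_lc)
  ultimately show ?thesis using True unfolding princ_def Ord by (simp add: algebra_simps)
qed (simp add: princ_def)



lemma scale_exists:
  fixes q l :: real
  assumes q: "q > 1" and l: "l > 0"
  shows "\<exists>m k. 1 \<le> m \<and> m \<le> q \<and> (l = m * q ^ k \<or> m = l * q ^ k)"
proof (cases "l \<ge> 1")
  case True
  obtain n where "l < q ^ n" using real_arch_pow[OF q] by blast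
  define K where "K = (LEAST n. l < q ^ n)"
  have K: "l < q ^ K" unfolding K_def by (rule LeastI) fact
  have K0: "K \<noteq> 0" proof assume "K = 0" then show False using K True by simp qed
  have K1: "\<not> l < q ^ (K - 1)" unfolding K_def by (rule not_less_Least) (use K0 K_def in simp)
  define m where "m = l / q ^ (K - 1)"
  have qp: "q ^ (K - 1) > 0" using q by simp
  have qK: "q ^ K = q ^ (K - 1) * q" proof -
    obtain j where "K = Suc j" using K0 not0_implies_Suc by blast
    then show ?thesis by (simp add: power_Suc2)
  qed
  have "1 \<le> m" using K1 qp by (simp add: m_def field_simps)
  moreover have "m \<le> q" using K qK qp by (simp add: m_def field_simps)
  moreover have "l = m * q ^ (K - 1)" using qp q unfolding m_def by simp
  ultimately show ?thesis by blast
next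
  case False
  obtain n where "1 / l < q ^ n" using real_arch_pow[OF q] by blast
  then have "1 < l * q ^ n" using l by (simp add: field_simps)
  define K where "K = (LEAST n. 1 < l * q ^ n)"
  have K: "1 < l * q ^ K" unfolding K_def by (rule LeastI) fact
  have K0: "K \<noteq> 0" proof assume "K = 0" then show False using K False by simp qed
  have K1: "\<not> 1 < l * q ^ (K - 1)" unfolding K_def by (rule not_less_Least) (use K0 K_def in simp)
  have qK: "q ^ K = q ^ (K - 1) * q" proof -
    obtain j where "K = Suc j" using K0 not0_implies_Suc by blast
    then show ?thesis by (simp add: power_Suc2)
  qed
  define m where "m = l * q ^ K"
  have "1 \<le> m" using K by (simp add: m_def)
  have "l * q ^ (K - 1) \<le> 1" using K1 by simp
  then have "(l * q ^ (K - 1)) * q \<le> 1 * q" using q by (intro mult_right_mono) auto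
  then have "m \<le> q" unfolding m_def qK by (simp add: mult.assoc)
  moreover note \<open>1 \<le> m\<close>
  ultimately show ?thesis unfolding m_def by blast
qed



lemma KCp_per: "g \<in> KCp p \<Longrightarrow> x > 0 \<Longrightarrow> g (real p * x) = g x"
  unfolding KCp_def by simp

lemma left_slope_per:
  assumes p: "prime p" and g: "g \<in> KCp p" and l: "l > 0"
  shows "left_slope g (real p * l) = left_slope g l / real p"
proof -
  have p0: "real p > 0" using p prime_gt_0_nat by simp
  obtain s c d where s: "s \<in> Hp p" "d > 0" "\<forall>x\<in>{l-d..l}. g x = s * x + c"
    using loc_left[OF KCp_pw[OF g] l] by blast
  define d' where "d' = min d (l/2)"
  have d': "d' > 0" "\<forall>x\<in>{l-d'..l}. g x = s * x + c" "l - d' > 0"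
    using s l unfolding d'_def by auto
  have "left_slope g l = s"
    unfolding left_slope_def by (rule tendsto_Lim) (use left_quot_loc[OF d'(1,2)] in simp_all)
  moreover have "left_slope g (real p * l) = s / real p"
  proof -
    have "\<forall>x\<in>{real p * l - real p * d'..real p * l}. g x = (s / real p) * x + c"
    proof
      fix x assume x: "x \<in> {real p * l - real p * d'..real p * l}"
      then have "x / real p \<in> {l-d'..l}" using p0 by (auto simp: field_simps)
      moreover have "x / real p > 0" using calculation d'(3) by auto
      ultimately have "g x = g (x / real p)" using KCp_per[OF g, of "x / real p"] p0 by simp
      also have "\<dots> = s * (x / real p) + c" using d'(2) \<open>x / real p \<in> {l-d'..l}\<close> by blast
      finally show "g x = (s / real p) * x + c" by simp
    qed
    moreover have "real p * d' > 0" using p0 d' by simp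
    ultimately have "((\<lambda>x. (g x - g (real p * l)) / (x - real p * l)) \<longlongrightarrow> s / real p) (at_left (real p * l))"
      by (intro left_quot_loc)
    then show ?thesis unfolding left_slope_def by (rule tendsto_Lim[rotated]) simp
  qed
  ultimately show ?thesis by simp
qed

lemma right_slope_per:
  assumes p: "prime p" and g: "g \<in> KCp p" and l: "l > 0"
  shows "right_slope g (real p * l) = right_slope g l / real p"
proof -
  have p0: "real p > 0" using p prime_gt_0_nat by simp
  obtain s c d where s: "s \<in> Hp p" "d > 0" "\<forall>x\<in>{l..l+d}. g x = s * x + c"
    using loc_right[OF KCp_pw[OF g] l] by blast
  have "right_slope g l = s"
    unfolding right_slope_def by (rule tendsto_Lim) (use right_quot_loc[OF s(2,3)] in simp_all)
  moreover have "right_slope g (real p * l) = s / real p"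
  proof -
    have "\<forall>x\<in>{real p * l..real p * l + real p * d}. g x = (s / real p) * x + c"
    proof
      fix x assume x: "x \<in> {real p * l..real p * l + real p * d}"
      then have "x / real p \<in> {l..l+d}" using p0 by (auto simp: field_simps)
      moreover have "x / real p > 0" using calculation l by auto
      ultimately have "g x = g (x / real p)" using KCp_per[OF g, of "x / real p"] p0 by simp
      also have "\<dots> = s * (x / real p) + c" using s(3) \<open>x / real p \<in> {l..l+d}\<close> by blast
      finally show "g x = (s / real p) * x + c" by simp
    qed
    moreover have "real p * d > 0" using p0 s by simp
    ultimately have "((\<lambda>x. (g x - g (real p * l)) / (x - real p * l)) \<longlongrightarrow> s / real p) (at_right (real p * l))"
      by (intro right_quot_loc)
    then show ?thesis unfolding right_slope_def by (rule tendsto_Lim[rotated]) simp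
  qed
  ultimately show ?thesis by simp
qed



definition sig :: "nat \<Rightarrow> (real \<Rightarrow> real) \<Rightarrow> real \<Rightarrow> real \<Rightarrow> real" where
  "sig p g u v = (SOME s. s \<in> Hp p \<and> (\<exists>c. \<forall>x\<in>{u..v}. g x = s * x + c))"

lemma sig_aff: "aff p g u v \<Longrightarrow> sig p g u v \<in> Hp p \<and> (\<exists>c. \<forall>x\<in>{u..v}. g x = sig p g u v * x + c)"
  unfolding sig_def by (rule someI_ex) blast

lemma slopes_bdd01:
  assumes p: "prime p" and g: "g \<in> KCp p"
  shows "\<exists>M. \<forall>m\<in>{1..real p}. padic_abs p (left_slope g m) \<le> M \<and> padic_abs p (right_slope g m) \<le> M"
proof -
  have p1: "real p > 1" using p prime_gt_1_nat by simp
  obtain P where gP: "good p g P (1/2) (2 * real p)" using pw_good[OF KCp_pw[OF g]] p1 by fastforce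
  have fin: "finite P" and sub: "P \<subseteq> {1/2..2*real p}" and aP: "1/2 \<in> P" and bP: "2 * real p \<in> P"
    and pc: "\<And>u v. u \<in> P \<Longrightarrow> v \<in> P \<Longrightarrow> u < v \<Longrightarrow> {u<..<v} \<inter> P = {} \<Longrightarrow> aff p g u v"
    using gP unfolding good_def by auto
  define T where "T = insert 0 ((\<lambda>(u,v). padic_abs p (sig p g u v)) ` (P \<times> P))"
  have Tf: "finite T" unfolding T_def using fin by simp
  define M where "M = Max T"
  have TM: "t \<in> T \<Longrightarrow> t \<le> M" for t unfolding M_def using Tf by (rule Max_ge)
  have uvM: "padic_abs p (sig p g u v) \<le> M" if "u \<in> P" "v \<in> P" for u v
    using TM[of "padic_abs p (sig p g u v)"] that unfolding T_def by force
  have "padic_abs p (left_slope g m) \<le> M \<and> padic_abs p (right_slope g m) \<le> M" if m: "m \<in> {1..real p}" for m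
  proof
    define L where "L = {x\<in>P. x < m}"
    define R where "R = {x\<in>P. m \<le> x}"
    have L: "finite L" "L \<noteq> {}" using fin aP m unfolding L_def by auto
    have R: "finite R" "R \<noteq> {}" using fin bP m p1 unfolding R_def by auto
    define u where "u = Max L"
    define v where "v = Min R"
    have "u \<in> L" unfolding u_def using L by (rule Max_in)
    then have u: "u \<in> P" "u < m" using L_def by auto
    have "v \<in> R" unfolding v_def using R by (rule Min_in)
    then have v: "v \<in> P" "m \<le> v" using R_def by auto
    have "{u<..<v} \<inter> P = {}"
    proof (rule ccontr)
      assume "{u<..<v} \<inter> P \<noteq> {}"
      then obtain y where y: "y \<in> P" "u < y" "y < v" by auto
      show False
      proof (cases "y < m")
        case True then have "y \<in> L" using y L_def by simp
        then have "y \<le> u" unfolding u_def using L Max_ge by blast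
        then show False using y by simp
      next
        case False then have "y \<in> R" using y R_def by simp
        then have "v \<le> y" unfolding v_def using R Min_le by blast
        then show False using y by simp
      qed
    qed
    then have "aff p g u v" using pc u v by simp
    then obtain c where c: "\<forall>x\<in>{u..v}. g x = sig p g u v * x + c" using sig_aff by blast
    have i: "\<forall>x\<in>{m - (m - u)..m}. g x = sig p g u v * x + c" using c v by auto
    have "m - u > 0" using u by simp
    from left_quot_loc[OF this i]
    have "((\<lambda>x. (g x - g m) / (x - m)) \<longlongrightarrow> sig p g u v) (at_left m)" .
    then have "left_slope g m = sig p g u v" unfolding left_slope_def by (rule tendsto_Lim[rotated]) simp
    then show "padic_abs p (left_slope g m) \<le> M" using uvM u v by simp
  next
    define L where "L = {x\<in>P. x \<le> m}"
    define R where "R = {x\<in>P. m < x}"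
    have L: "finite L" "L \<noteq> {}" using fin aP m unfolding L_def by auto
    have R: "finite R" "R \<noteq> {}" using fin bP m p1 unfolding R_def by auto
    define u where "u = Max L"
    define v where "v = Min R"
    have "u \<in> L" unfolding u_def using L by (rule Max_in)
    then have u: "u \<in> P" "u \<le> m" using L_def by auto
    have "v \<in> R" unfolding v_def using R by (rule Min_in)
    then have v: "v \<in> P" "m < v" using R_def by auto
    have "{u<..<v} \<inter> P = {}"
    proof (rule ccontr)
      assume "{u<..<v} \<inter> P \<noteq> {}"
      then obtain y where y: "y \<in> P" "u < y" "y < v" by auto
      show False
      proof (cases "y \<le> m")
        case True then have "y \<in> L" using y L_def by simp
        then have "y \<le> u" unfolding u_def using L Max_ge by blast
        then show False using y by simp
      next
        case False then have "y \<in> R" using y R_def by simp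
        then have "v \<le> y" unfolding v_def using R Min_le by blast
        then show False using y by simp
      qed
    qed
    then have "aff p g u v" using pc u v by simp
    then obtain c where c: "\<forall>x\<in>{u..v}. g x = sig p g u v * x + c" using sig_aff by blast
    have i: "\<forall>x\<in>{m..m + (v - m)}. g x = sig p g u v * x + c" using c u by auto
    have "v - m > 0" using v by simp
    from right_quot_loc[OF this i]
    have "((\<lambda>x. (g x - g m) / (x - m)) \<longlongrightarrow> sig p g u v) (at_right m)" .
    then have "right_slope g m = sig p g u v" unfolding right_slope_def by (rule tendsto_Lim[rotated]) simp
    then show "padic_abs p (right_slope g m) \<le> M" using uvM u v by simp
  qed
  then show ?thesis by blast
qed

lemma W_per:
  assumes p: "prime p" and g: "g \<in> KCp p" and l: "l > 0"
  shows "padic_abs p (left_slope g (real p * l)) / (real p * l) = padic_abs p (left_slope g l) / l"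
    and "padic_abs p (right_slope g (real p * l)) / (real p * l) = padic_abs p (right_slope g l) / l"
proof -
  have p0: "real p > 0" using p prime_gt_0_nat by simp
  show "padic_abs p (left_slope g (real p * l)) / (real p * l) = padic_abs p (left_slope g l) / l"
    using left_slope_per[OF p g l] padic_abs_divp1[OF p left_slope_Hp[OF g l]] p0 by simp
  show "padic_abs p (right_slope g (real p * l)) / (real p * l) = padic_abs p (right_slope g l) / l"
    using right_slope_per[OF p g l] padic_abs_divp1[OF p right_slope_Hp[OF g l]] p0 by simp
qed

lemma W_pow:
  assumes p: "prime p" and g: "g \<in> KCp p" and l: "l > 0"
  shows "padic_abs p (left_slope g (real p ^ k * l)) / (real p ^ k * l) = padic_abs p (left_slope g l) / l \<and>
         padic_abs p (right_slope g (real p ^ k * l)) / (real p ^ k * l) = padic_abs p (right_slope g l) / l"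
proof (induction k)
  case 0 then show ?case by simp
next
  case (Suc k)
  have p0: "real p > 0" using p prime_gt_0_nat by simp
  have pos: "real p ^ k * l > 0" using p0 l by simp
  have e: "real p ^ Suc k * l = real p * (real p ^ k * l)" by simp
  show ?case unfolding e using W_per[OF p g pos] Suc by simp
qed

lemma W_bdd:
  assumes p: "prime p" and g: "g \<in> KCp p"
  shows "\<exists>M. \<forall>l>0. padic_abs p (left_slope g l) / l \<le> M \<and> padic_abs p (right_slope g l) / l \<le> M"
proof -
  have p1: "real p > 1" using p prime_gt_1_nat by simp
  obtain M where M: "\<forall>m\<in>{1..real p}. padic_abs p (left_slope g m) \<le> M \<and> padic_abs p (right_slope g m) \<le> M"
    using slopes_bdd01[OF p g] by blast
  have "padic_abs p (left_slope g l) / l \<le> M \<and> padic_abs p (right_slope g l) / l \<le> M" if l: "l > 0" for l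
  proof -
    obtain m k where mk: "1 \<le> m" "m \<le> real p" "l = m * real p ^ k \<or> m = l * real p ^ k"
      using scale_exists[OF p1 l] by blast
    have m0: "m > 0" using mk by simp
    have eq: "padic_abs p (left_slope g l) / l = padic_abs p (left_slope g m) / m \<and>
              padic_abs p (right_slope g l) / l = padic_abs p (right_slope g m) / m"
      using mk(3)
    proof
      assume "l = m * real p ^ k"
      then show ?thesis using W_pow[OF p g m0, of k] by (simp add: mult.commute)
    next
      assume "m = l * real p ^ k"
      then show ?thesis using W_pow[OF p g l, of k] by (simp add: mult.commute)
    qed
    have nn: "padic_abs p (left_slope g m) \<ge> 0" "padic_abs p (right_slope g m) \<ge> 0"
      using padic_abs_nonneg[OF p left_slope_Hp[OF g m0]] padic_abs_nonneg[OF p right_slope_Hp[OF g m0]] by auto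
    have "padic_abs p (left_slope g m) / m \<le> padic_abs p (left_slope g m) / 1"
      using nn mk(1) by (intro divide_left_mono) auto
    moreover have "padic_abs p (right_slope g m) / m \<le> padic_abs p (right_slope g m) / 1"
      using nn mk(1) by (intro divide_left_mono) auto
    moreover have "padic_abs p (left_slope g m) \<le> M" "padic_abs p (right_slope g m) \<le> M"
      using M mk(1,2) by auto
    ultimately show ?thesis using eq by simp
  qed
  then show ?thesis by blast
qed

lemma pnorm_le_iff:
  assumes p: "prime p" and g: "g \<in> KCp p"
  shows "pnorm p g \<le> r \<longleftrightarrow>
    (\<forall>l>0. padic_abs p (left_slope g l) / l \<le> r \<and> padic_abs p (right_slope g l) / l \<le> r)"
proof -
  define S where "S = {padic_abs p h / l | l h. l > 0 \<and> (h = left_slope g l \<or> h = right_slope g l)}"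
  have "padic_abs p (left_slope g 1) / 1 \<in> S" unfolding S_def
    by (rule CollectI, rule exI[of _ 1], rule exI[of _ "left_slope g 1"]) simp
  then have ne: "S \<noteq> {}" by blast
  obtain M where M: "\<forall>l>0. padic_abs p (left_slope g l) / l \<le> M \<and> padic_abs p (right_slope g l) / l \<le> M"
    using W_bdd[OF p g] by blast
  have Sx: "\<exists>l. l > 0 \<and> (x = padic_abs p (left_slope g l) / l \<or> x = padic_abs p (right_slope g l) / l)"
    if xS0: "x \<in> S" for x
  proof -
    obtain l h where "x = padic_abs p h / l" "l > 0" "h = left_slope g l \<or> h = right_slope g l"
      using xS0 unfolding S_def by blast
    then show ?thesis by blast
  qed
  have xS: "padic_abs p (left_slope g l) / l \<in> S" "padic_abs p (right_slope g l) / l \<in> S" if "l > 0" for l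
    unfolding S_def using that by blast+
  have "\<forall>x\<in>S. x \<le> M"
  proof
    fix x assume "x \<in> S"
    then obtain l where "l > 0" "x = padic_abs p (left_slope g l) / l \<or> x = padic_abs p (right_slope g l) / l"
      using Sx by blast
    then show "x \<le> M" using M by auto
  qed
  then have bdd: "bdd_above S" unfolding bdd_above_def by blast
  have "pnorm p g = Sup S" unfolding pnorm_def S_def ..
  then have "pnorm p g \<le> r \<longleftrightarrow> (\<forall>x\<in>S. x \<le> r)" using cSup_le_iff[OF ne bdd] by simp
  also have "\<dots> \<longleftrightarrow> (\<forall>l>0. padic_abs p (left_slope g l) / l \<le> r \<and> padic_abs p (right_slope g l) / l \<le> r)"
  proof
    assume "\<forall>x\<in>S. x \<le> r" then show "\<forall>l>0. padic_abs p (left_slope g l) / l \<le> r \<and> padic_abs p (right_slope g l) / l \<le> r"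
      using xS by blast
  next
    assume a: "\<forall>l>0. padic_abs p (left_slope g l) / l \<le> r \<and> padic_abs p (right_slope g l) / l \<le> r"
    show "\<forall>x\<in>S. x \<le> r"
    proof
      fix x assume "x \<in> S"
      then obtain l where "l > 0" "x = padic_abs p (left_slope g l) / l \<or> x = padic_abs p (right_slope g l) / l"
        using Sx by blast
      then show "x \<le> r" using a by auto
    qed
  qed
  finally show ?thesis .
qed



lemma er_sup_minus: "sup a b - ereal r = sup (a - ereal r) (b - ereal (r::real))"
  by (cases a; cases b) (auto simp: sup_ereal_def max_def)

lemma er_plus_minus: "a \<noteq> \<infinity> \<Longrightarrow> (x + a) - ereal r = (x - ereal r) + (a::ereal)"
  by (cases x; cases a) auto

lemma er_minus_plus: "(x - ereal r) + ereal r = (x::ereal)"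
  by (cases x) auto
lemma er_plus_minus2: "(x + ereal r) - ereal r = (x::ereal)"
  by (cases x) auto

lemma er_mult_sup: "c > 0 \<Longrightarrow> ereal c * sup a b = sup (ereal c * a) (ereal c * b)"
  by (cases a; cases b) (auto simp: sup_ereal_def max_def)

lemma er_mult_plus: "c > 0 \<Longrightarrow> a \<noteq> \<infinity> \<Longrightarrow> ereal c * (x + a) = ereal c * x + ereal c * a"
  by (cases x; cases a) (auto simp: algebra_simps)

lemma er_mult_inv: "c > 0 \<Longrightarrow> ereal (1 / c) * (ereal c * x) = x"
  by (cases x) auto
lemma er_mult_inv2: "c > 0 \<Longrightarrow> ereal c * (ereal (1 / c) * x) = x"
  by (cases x) auto

lemma er_abs_scale: "c > 0 \<Longrightarrow> \<bar>ereal c * a - ereal c * b\<bar> = ereal c * \<bar>a - b\<bar>"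
proof (cases a; cases b)
  fix r s assume "c > 0" "a = ereal r" "b = ereal s"
  moreover have "\<bar>c * r - c * s\<bar> = c * \<bar>r - s\<bar>"
    using \<open>c > 0\<close> by (simp add: right_diff_distrib[symmetric] abs_mult)
  ultimately show ?thesis by simp
qed auto

lemma er_scale_less: "c > 0 \<Longrightarrow> (ereal c * t < ereal (c * e)) \<longleftrightarrow> t < ereal e"
  by (cases t) auto



lemma topH_open:
  "openin (topH p S) U \<longleftrightarrow> U \<subseteq> S \<and> (\<forall>\<xi>\<in>U. \<exists>e>0. \<forall>\<eta>\<in>S.
       (\<xi> = \<eta> \<or> (\<forall>x\<in>{1..real p}. \<bar>\<xi> x - \<eta> x\<bar> < ereal e)) \<longrightarrow> \<eta> \<in> U)"
proof -
  let ?L = "\<lambda>U. U \<subseteq> S \<and> (\<forall>\<xi>\<in>U. \<exists>e>0. \<forall>\<eta>\<in>S.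
       (\<xi> = \<eta> \<or> (\<forall>x\<in>{1..real p}. \<bar>\<xi> x - \<eta> x\<bar> < ereal e)) \<longrightarrow> \<eta> \<in> U)"
  have int: "?L (U \<inter> V)" if U: "?L U" and V: "?L V" for U V
    proof (intro conjI ballI)
      show "U \<inter> V \<subseteq> S" using U by auto
      fix \<xi> assume "\<xi> \<in> U \<inter> V"
      then obtain e1 e2 where e1: "e1 > 0" "\<forall>\<eta>\<in>S. (\<xi> = \<eta> \<or> (\<forall>x\<in>{1..real p}. \<bar>\<xi> x - \<eta> x\<bar> < ereal e1)) \<longrightarrow> \<eta> \<in> U"
        and e2: "e2 > 0" "\<forall>\<eta>\<in>S. (\<xi> = \<eta> \<or> (\<forall>x\<in>{1..real p}. \<bar>\<xi> x - \<eta> x\<bar> < ereal e2)) \<longrightarrow> \<eta> \<in> V"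
        using U V by blast
      show "\<exists>e>0. \<forall>\<eta>\<in>S. (\<xi> = \<eta> \<or> (\<forall>x\<in>{1..real p}. \<bar>\<xi> x - \<eta> x\<bar> < ereal e)) \<longrightarrow> \<eta> \<in> U \<inter> V"
      proof (intro exI[of _ "min e1 e2"] conjI ballI impI)
        show "min e1 e2 > 0" using e1 e2 by simp
        fix \<eta> assume "\<eta> \<in> S" and h: "\<xi> = \<eta> \<or> (\<forall>x\<in>{1..real p}. \<bar>\<xi> x - \<eta> x\<bar> < ereal (min e1 e2))"
        have "ereal (min e1 e2) \<le> ereal e1" "ereal (min e1 e2) \<le> ereal e2" by auto
        then have "\<xi> = \<eta> \<or> (\<forall>x\<in>{1..real p}. \<bar>\<xi> x - \<eta> x\<bar> < ereal e1)"
             "\<xi> = \<eta> \<or> (\<forall>x\<in>{1..real p}. \<bar>\<xi> x - \<eta> x\<bar> < ereal e2)"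
          using h by (meson order_less_le_trans)+
        then show "\<eta> \<in> U \<inter> V" using e1 e2 \<open>\<eta> \<in> S\<close> by blast
      qed
    qed
  have union: "?L (\<Union>K)" if K: "\<forall>U\<in>K. ?L U" for K
    proof (intro conjI ballI)
      show "\<Union>K \<subseteq> S" using K by auto
      fix \<xi> assume "\<xi> \<in> \<Union>K"
      then obtain U where "U \<in> K" "\<xi> \<in> U" by blast
      then obtain e where "e > 0" "\<forall>\<eta>\<in>S. (\<xi> = \<eta> \<or> (\<forall>x\<in>{1..real p}. \<bar>\<xi> x - \<eta> x\<bar> < ereal e)) \<longrightarrow> \<eta> \<in> U"
        using K by blast
      then show "\<exists>e>0. \<forall>\<eta>\<in>S. (\<xi> = \<eta> \<or> (\<forall>x\<in>{1..real p}. \<bar>\<xi> x - \<eta> x\<bar> < ereal e)) \<longrightarrow> \<eta> \<in> \<Union>K"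
        using \<open>U \<in> K\<close> by blast
    qed
  have "istopology ?L"
    unfolding istopology_def
    by (rule conjI; intro allI impI; (rule int union; assumption+)?)
  then show ?thesis unfolding topH_def by simp
qed

lemma topH_space: "topspace (topH p S) = S"
proof -
  have "openin (topH p S) S" unfolding topH_open by (auto intro: exI[of _ 1])
  moreover have "\<And>U. openin (topH p S) U \<Longrightarrow> U \<subseteq> S" unfolding topH_open by blast
  ultimately show ?thesis unfolding topspace_def by blast
qed


lemma topH_transfer:
  assumes bij: "bij_betw F A B" and c: "c > 0"
    and sc: "\<And>\<xi> \<eta> x. \<xi> \<in> A \<Longrightarrow> \<eta> \<in> A \<Longrightarrow> \<bar>F \<xi> x - F \<eta> x\<bar> = ereal c * \<bar>\<xi> x - \<eta> x\<bar>"
    and U: "U \<subseteq> A"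
  shows "openin (topH p A) U \<longleftrightarrow> openin (topH p B) (F ` U)"
proof -
  have inj: "inj_on F A" and im: "F ` A = B" using bij by (auto simp: bij_betw_def)
  show ?thesis
  proof
    assume o: "openin (topH p A) U"
    show "openin (topH p B) (F ` U)" unfolding topH_open
    proof (intro conjI ballI)
      show "F ` U \<subseteq> B" using U im by auto
      fix \<xi>' assume "\<xi>' \<in> F ` U"
      then obtain \<xi> where \<xi>: "\<xi> \<in> U" "\<xi>' = F \<xi>" by blast
      then obtain e where e: "e > 0" "\<forall>\<eta>\<in>A. (\<xi> = \<eta> \<or> (\<forall>x\<in>{1..real p}. \<bar>\<xi> x - \<eta> x\<bar> < ereal e)) \<longrightarrow> \<eta> \<in> U"
        using o unfolding topH_open by blast
      show "\<exists>e>0. \<forall>\<eta>\<in>B. (\<xi>' = \<eta> \<or> (\<forall>x\<in>{1..real p}. \<bar>\<xi>' x - \<eta> x\<bar> < ereal e)) \<longrightarrow> \<eta> \<in> F ` U"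
      proof (intro exI[of _ "c * e"] conjI ballI impI)
        show "c * e > 0" using c e by simp
        fix \<eta>' assume "\<eta>' \<in> B" and h: "\<xi>' = \<eta>' \<or> (\<forall>x\<in>{1..real p}. \<bar>\<xi>' x - \<eta>' x\<bar> < ereal (c * e))"
        then obtain \<eta> where \<eta>: "\<eta> \<in> A" "\<eta>' = F \<eta>" using im by blast
        have "\<xi> \<in> A" using U \<xi> by auto
        have "\<xi> = \<eta> \<or> (\<forall>x\<in>{1..real p}. \<bar>\<xi> x - \<eta> x\<bar> < ereal e)"
          using h
        proof
          assume "\<xi>' = \<eta>'" then have "\<xi> = \<eta>" using inj \<open>\<xi> \<in> A\<close> \<eta> \<xi> by (auto dest: inj_onD)
          then show ?thesis by simp
        next
          assume a: "\<forall>x\<in>{1..real p}. \<bar>\<xi>' x - \<eta>' x\<bar> < ereal (c * e)"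
          have "\<forall>x\<in>{1..real p}. \<bar>\<xi> x - \<eta> x\<bar> < ereal e"
          proof
            fix x assume "x \<in> {1..real p}"
            then have "\<bar>F \<xi> x - F \<eta> x\<bar> < ereal (c * e)" using a \<xi> \<eta> by blast
            then have "ereal c * \<bar>\<xi> x - \<eta> x\<bar> < ereal (c * e)"
              using sc[OF \<open>\<xi> \<in> A\<close> \<eta>(1), of x] by simp
            then show "\<bar>\<xi> x - \<eta> x\<bar> < ereal e" using er_scale_less[OF c] by simp
          qed
          then show ?thesis by simp
        qed
        then have "\<eta> \<in> U" using e \<eta> by blast
        then show "\<eta>' \<in> F ` U" using \<eta> by blast
      qed
    qed
  next
    assume o: "openin (topH p B) (F ` U)"
    show "openin (topH p A) U" unfolding topH_open
    proof (intro conjI ballI)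
      show "U \<subseteq> A" by fact
      fix \<xi> assume \<xi>: "\<xi> \<in> U"
      then have "\<xi> \<in> A" using U by auto
      obtain e where e: "e > 0" "\<forall>\<eta>\<in>B. (F \<xi> = \<eta> \<or> (\<forall>x\<in>{1..real p}. \<bar>F \<xi> x - \<eta> x\<bar> < ereal e)) \<longrightarrow> \<eta> \<in> F ` U"
        using o \<xi> unfolding topH_open by blast
      show "\<exists>e>0. \<forall>\<eta>\<in>A. (\<xi> = \<eta> \<or> (\<forall>x\<in>{1..real p}. \<bar>\<xi> x - \<eta> x\<bar> < ereal e)) \<longrightarrow> \<eta> \<in> U"
      proof (intro exI[of _ "e / c"] conjI ballI impI)
        show "e / c > 0" using c e by simp
        fix \<eta> assume \<eta>: "\<eta> \<in> A" and h: "\<xi> = \<eta> \<or> (\<forall>x\<in>{1..real p}. \<bar>\<xi> x - \<eta> x\<bar> < ereal (e / c))"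
        have "F \<xi> = F \<eta> \<or> (\<forall>x\<in>{1..real p}. \<bar>F \<xi> x - F \<eta> x\<bar> < ereal e)"
          using h
        proof
          assume "\<xi> = \<eta>" then show ?thesis by simp
        next
          assume a: "\<forall>x\<in>{1..real p}. \<bar>\<xi> x - \<eta> x\<bar> < ereal (e / c)"
          have "\<forall>x\<in>{1..real p}. \<bar>F \<xi> x - F \<eta> x\<bar> < ereal e"
          proof
            fix x assume "x \<in> {1..real p}"
            then have "\<bar>\<xi> x - \<eta> x\<bar> < ereal (e / c)" using a by blast
            then have "ereal c * \<bar>\<xi> x - \<eta> x\<bar> < ereal (c * (e / c))" using er_scale_less[OF c] by blast
            then show "\<bar>F \<xi> x - F \<eta> x\<bar> < ereal e" using sc[OF \<open>\<xi> \<in> A\<close> \<eta>, of x] c by simp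
          qed
          then show ?thesis by simp
        qed
        moreover have "F \<eta> \<in> B" using \<eta> im by blast
        ultimately have "F \<eta> \<in> F ` U" using e by blast
        then obtain \<zeta> where "\<zeta> \<in> U" "F \<eta> = F \<zeta>" by blast
        moreover have "\<zeta> \<in> A" using U \<open>\<zeta> \<in> U\<close> by auto
        ultimately have "\<eta> = \<zeta>" using inj \<eta> by (auto dest: inj_onD)
        then show "\<eta> \<in> U" using \<open>\<zeta> \<in> U\<close> by simp
      qed
    qed
  qed
qed


lemma cov_transfer:
  assumes bij: "bij_betw F (topspace X) (topspace Y)"
    and op: "\<And>U. U \<subseteq> topspace X \<Longrightarrow> openin X U \<longleftrightarrow> openin Y (F ` U)"
    and cd: "cov_dim_le X n"
  shows "cov_dim_le Y n"
  unfolding cov_dim_le_def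
proof (intro allI impI)
  have inj: "inj_on F (topspace X)" and im: "F ` topspace X = topspace Y" using bij by (auto simp: bij_betw_def)
  define G where "G = inv_into (topspace X) F"
  have GF: "G (F x) = x" if "x \<in> topspace X" for x using inj that unfolding G_def by simp
  have FG: "F (G y) = y" if "y \<in> topspace Y" for y proof -
    have "y \<in> F ` topspace X" using im that by simp
    then show ?thesis unfolding G_def by (rule f_inv_into_f)
  qed
  have Gin: "G y \<in> topspace X" if "y \<in> topspace Y" for y proof -
    have "y \<in> F ` topspace X" using im that by simp
    then show ?thesis unfolding G_def by (rule inv_into_into)
  qed
  fix \<U> assume \<U>: "finite \<U> \<and> (\<forall>U\<in>\<U>. openin Y U) \<and> \<Union>\<U> = topspace Y"
  define \<U>' where "\<U>' = (\<lambda>U. G ` U) ` \<U>"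
  have Uo: "\<forall>U\<in>\<U>. openin Y U" using \<U> by (rule conjunct1[OF conjunct2])
  have sub: "U \<subseteq> topspace Y" if "U \<in> \<U>" for U
  proof -
    have "openin Y U" using Uo that by blast
    then show ?thesis by (rule openin_subset)
  qed
  have FGU: "F ` G ` U = U" if U: "U \<subseteq> topspace Y" for U
    using U FG by force
  have Uf: "finite \<U>" using \<U> by (rule conjunct1)
  have Uu: "\<Union>\<U> = topspace Y" using \<U> by (rule conjunct2[OF conjunct2])
  have "finite \<U>'" using Uf unfolding \<U>'_def by simp
  moreover have "\<forall>U\<in>\<U>'. openin X U"
  proof
    fix U' assume "U' \<in> \<U>'"
    then obtain U where U: "U \<in> \<U>" "U' = G ` U" unfolding \<U>'_def by blast
    have U'X: "U' \<subseteq> topspace X" using U sub Gin by auto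
    have "openin Y U" using Uo U(1) by blast
    moreover have "F ` U' = U" using U(2) FGU[OF sub[OF U(1)]] by simp
    ultimately have "openin Y (F ` U')" by simp
    then show "openin X U'" using op[OF U'X] by simp
  qed
  moreover have "\<Union>\<U>' = topspace X"
  proof
    show "\<Union>\<U>' \<subseteq> topspace X" using sub Gin unfolding \<U>'_def by blast
    show "topspace X \<subseteq> \<Union>\<U>'"
    proof
      fix x assume x: "x \<in> topspace X"
      then have "F x \<in> topspace Y" using im by blast
      then have "F x \<in> \<Union>\<U>" by (simp only: Uu)
      then obtain U where "U \<in> \<U>" "F x \<in> U" by (rule UnionE)
      then have "G (F x) \<in> G ` U" by blast
      then show "x \<in> \<Union>\<U>'" using GF[OF x] \<open>U \<in> \<U>\<close> unfolding \<U>'_def by auto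
    qed
  qed
  ultimately have cov': "finite \<U>' \<and> (\<forall>U\<in>\<U>'. openin X U) \<and> \<Union>\<U>' = topspace X"
    by (intro conjI)
  have "\<exists>\<V>. finite \<V> \<and> (\<forall>V\<in>\<V>. openin X V) \<and> \<Union>\<V> = topspace X \<and>
             (\<forall>V\<in>\<V>. \<exists>U\<in>\<U>'. V \<subseteq> U) \<and> (\<forall>x\<in>topspace X. card {V\<in>\<V>. x \<in> V} \<le> n + 1)"
    using cd cov' unfolding cov_dim_le_def by (elim allE impE)
  then obtain \<V>' where V'all: "finite \<V>' \<and> (\<forall>V\<in>\<V>'. openin X V) \<and> \<Union>\<V>' = topspace X \<and>
             (\<forall>V\<in>\<V>'. \<exists>U\<in>\<U>'. V \<subseteq> U) \<and> (\<forall>x\<in>topspace X. card {V\<in>\<V>'. x \<in> V} \<le> n + 1)"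
    by (elim exE)
  have V': "finite \<V>'" "\<forall>V\<in>\<V>'. openin X V" "\<Union>\<V>' = topspace X"
     "\<forall>V\<in>\<V>'. \<exists>U\<in>\<U>'. V \<subseteq> U" "\<forall>x\<in>topspace X. card {V\<in>\<V>'. x \<in> V} \<le> n + 1"
    using V'all by blast+
  define \<V> where "\<V> = (\<lambda>V. F ` V) ` \<V>'"
  have Vsub: "V \<subseteq> topspace X" if "V \<in> \<V>'" for V
  proof -
    have "openin X V" using V'(2) that by (rule bspec)
    then show ?thesis by (rule openin_subset)
  qed
  have "finite \<V>" unfolding \<V>_def by (rule finite_imageI) (rule V'(1))
  moreover have "\<forall>V\<in>\<V>. openin Y V"
  proof
    fix V assume "V \<in> \<V>"
    then obtain V0 where V0: "V0 \<in> \<V>'" "V = F ` V0" unfolding \<V>_def by (rule imageE)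
    have "openin X V0" using V'(2) V0(1) by (rule bspec)
    then have "openin Y (F ` V0)" by (rule iffD1[OF op[OF Vsub[OF V0(1)]]])
    then show "openin Y V" using V0(2) by simp
  qed
  moreover have "\<Union>\<V> = topspace Y"
  proof -
    have "\<Union>\<V> = F ` \<Union>\<V>'" unfolding \<V>_def by blast
    also have "\<dots> = F ` topspace X" by (simp only: V'(3))
    also have "\<dots> = topspace Y" by (rule im)
    finally show ?thesis .
  qed
  moreover have "\<forall>V\<in>\<V>. \<exists>U\<in>\<U>. V \<subseteq> U"
  proof
    fix V assume "V \<in> \<V>"
    then obtain V0 where V0: "V0 \<in> \<V>'" "V = F ` V0" unfolding \<V>_def by blast
    then obtain U' where "U' \<in> \<U>'" "V0 \<subseteq> U'" using V'(4) by blast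
    then obtain U where "U \<in> \<U>" "U' = G ` U" unfolding \<U>'_def by blast
    then have "V \<subseteq> F ` G ` U" using V0 \<open>V0 \<subseteq> U'\<close> by blast
    moreover have "F ` G ` U = U" by (rule FGU[OF sub[OF \<open>U \<in> \<U>\<close>]])
    ultimately have "V \<subseteq> U" by simp
    then show "\<exists>U\<in>\<U>. V \<subseteq> U" using \<open>U \<in> \<U>\<close> by blast
  qed
  moreover have "\<forall>y\<in>topspace Y. card {V\<in>\<V>. y \<in> V} \<le> n + 1"
  proof
    fix y assume y: "y \<in> topspace Y"
    define x where "x = G y"
    have x: "x \<in> topspace X" "F x = y" using Gin FG y unfolding x_def by auto
    have "{V\<in>\<V>. y \<in> V} \<subseteq> (\<lambda>V. F ` V) ` {V\<in>\<V>'. x \<in> V}"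
    proof
      fix V assume "V \<in> {V\<in>\<V>. y \<in> V}"
      then obtain V0 where V0: "V0 \<in> \<V>'" "V = F ` V0" "y \<in> V" unfolding \<V>_def by blast
      then obtain x' where "x' \<in> V0" "y = F x'" by blast
      then have "x' = x" using inj x Vsub[OF V0(1)] by (auto dest: inj_onD)
      then show "V \<in> (\<lambda>V. F ` V) ` {V\<in>\<V>'. x \<in> V}" using V0 \<open>x' \<in> V0\<close> by blast
    qed
    then have "card {V\<in>\<V>. y \<in> V} \<le> card ((\<lambda>V. F ` V) ` {V\<in>\<V>'. x \<in> V})"
      using V'(1) by (intro card_mono) auto
    also have "\<dots> \<le> card {V\<in>\<V>'. x \<in> V}" by (rule card_image_le) (use V'(1) in simp)
    also have "\<dots> \<le> n + 1" using V'(5) x by blast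
    finally show "card {V\<in>\<V>. y \<in> V} \<le> n + 1" .
  qed
  ultimately have "finite \<V> \<and> (\<forall>V\<in>\<V>. openin Y V) \<and> \<Union>\<V> = topspace Y \<and>
             (\<forall>V\<in>\<V>. \<exists>U\<in>\<U>. V \<subseteq> U) \<and> (\<forall>x\<in>topspace Y. card {V\<in>\<V>. x \<in> V} \<le> n + 1)"
    by (intro conjI)
  then show "\<exists>\<V>. finite \<V> \<and> (\<forall>V\<in>\<V>. openin Y V) \<and> \<Union>\<V> = topspace Y \<and>
             (\<forall>V\<in>\<V>. \<exists>U\<in>\<U>. V \<subseteq> U) \<and> (\<forall>x\<in>topspace Y. card {V\<in>\<V>. x \<in> V} \<le> n + 1)"
    by (rule exI)
qed

lemma covering_dim_transfer:
  assumes bij: "bij_betw F (topspace X) (topspace Y)"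
    and op: "\<And>U. U \<subseteq> topspace X \<Longrightarrow> openin X U \<longleftrightarrow> openin Y (F ` U)"
  shows "covering_dim X = covering_dim Y"
proof -
  have inj: "inj_on F (topspace X)" and im: "F ` topspace X = topspace Y" using bij by (auto simp: bij_betw_def)
  define G where "G = inv_into (topspace X) F"
  have bijG: "bij_betw G (topspace Y) (topspace X)" unfolding G_def by (rule bij_betw_inv_into[OF bij])
  have FG: "F (G y) = y" if "y \<in> topspace Y" for y proof -
    have "y \<in> F ` topspace X" using im that by simp
    then show ?thesis unfolding G_def by (rule f_inv_into_f)
  qed
  have Gin: "G y \<in> topspace X" if "y \<in> topspace Y" for y proof -
    have "y \<in> F ` topspace X" using im that by simp
    then show ?thesis unfolding G_def by (rule inv_into_into)
  qed
  have opG: "openin Y V \<longleftrightarrow> openin X (G ` V)" if V: "V \<subseteq> topspace Y" for V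
  proof -
    have "G ` V \<subseteq> topspace X" using Gin V by auto
    moreover have "F ` G ` V = V" using FG V by force
    ultimately show ?thesis using op[of "G ` V"] by simp
  qed
  have cdiff: "cov_dim_le X n \<longleftrightarrow> cov_dim_le Y n" for n
  proof
    assume "cov_dim_le X n" then show "cov_dim_le Y n" using cov_transfer[OF bij op] by blast
  next
    assume "cov_dim_le Y n" then show "cov_dim_le X n" using cov_transfer[OF bijG opG] by blast
  qed
  have sets: "{ereal (real n) | n. cov_dim_le X n} = {ereal (real n) | n. cov_dim_le Y n}"
  proof (rule Collect_cong)
    fix x show "(\<exists>n. x = ereal (real n) \<and> cov_dim_le X n) = (\<exists>n. x = ereal (real n) \<and> cov_dim_le Y n)"
      using cdiff by blast
  qed
  have emp: "(topspace X = {}) = (topspace Y = {})"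
  proof
    assume "topspace X = {}" then show "topspace Y = {}" using im by (metis image_empty)
  next
    assume "topspace Y = {}" then show "topspace X = {}" using im by (metis image_is_empty)
  qed
  show ?thesis unfolding covering_dim_def sets emp by (rule refl)
qed



lemma princ_cong:
  assumes "\<forall>x>0. g x = h x"
  shows "princ p g H = princ p h H"
proof (cases "H \<in> Cp p")
  case True
  define l where "l = rep p H"
  have l: "l > 0" using rep_pos[OF True] l_def by simp
  have Ord: "Ord p H k = Lim (at_right 0) (QO k l) - Lim (at_left 0) (QO k l)" for k
    unfolding Ord_def QO_def l_def Let_def ..
  have eq: "QO g l e = QO h l e" if "e > -1" for e
  proof -
    have "(1 + e) * l > 0" using that l by simp
    then show ?thesis unfolding QO_def using assms l by simp
  qed
  have "eventually (\<lambda>e. e \<in> {0<..<1}) (at_right (0::real))" by (intro eventually_at_right_real) simp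
  then have "eventually (\<lambda>e. QO g l e = QO h l e) (at_right 0)"
    by (rule eventually_mono) (use eq in auto)
  then have R: "Lim (at_right 0) (QO g l) = Lim (at_right 0) (QO h l)" by (rule Lim_cong) simp
  have "eventually (\<lambda>e. e \<in> {-1<..<0}) (at_left (0::real))" by (intro eventually_at_left_real) simp
  then have "eventually (\<lambda>e. QO g l e = QO h l e) (at_left 0)"
    by (rule eventually_mono) (use eq in auto)
  then have L: "Lim (at_left 0) (QO g l) = Lim (at_left 0) (QO h l)" by (rule Lim_cong) simp
  show ?thesis unfolding princ_def using True R L Ord by simp
qed (simp add: princ_def)

lemma emb_eq_pos: "emb g = emb h \<Longrightarrow> \<forall>x>0. g x = h x"
  unfolding emb_def by (metis ereal.inject)

lemma emb_ne_minf: "emb g \<noteq> minf"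
proof
  assume "emb g = minf"
  then have "emb g 1 = minf 1" by simp
  then show False unfolding emb_def minf_def by simp
qed

lemma H0rho_iff:
  "\<xi> \<in> H0rho p D r \<longleftrightarrow> \<xi> = minf \<or> (\<exists>g\<in>KCp p. \<xi> = emb g \<and> (\<forall>H. D H + princ p g H \<ge> 0) \<and> pnorm p g \<le> r)"
proof
  assume a: "\<xi> \<in> H0rho p D r"
  then have h0: "\<xi> \<in> H0 p D" and h1: "\<xi> = minf \<or> (\<exists>g\<in>KCp p. \<xi> = emb g \<and> pnorm p g \<le> r)"
    unfolding H0rho_def by auto
  show "\<xi> = minf \<or> (\<exists>g\<in>KCp p. \<xi> = emb g \<and> (\<forall>H. D H + princ p g H \<ge> 0) \<and> pnorm p g \<le> r)"
  proof (cases "\<xi> = minf")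
    case False
    then obtain g where g: "g \<in> KCp p" "\<xi> = emb g" "pnorm p g \<le> r" using h1 by blast
    from h0 False obtain g0 where g0: "\<xi> = emb g0" "\<forall>H. D H + princ p g0 H \<ge> 0"
      unfolding H0_def by blast
    have "\<forall>x>0. g x = g0 x" using g(2) g0(1) emb_eq_pos by metis
    then have "princ p g H = princ p g0 H" for H by (rule princ_cong)
    then show ?thesis using g g0 by auto
  qed simp
next
  assume "\<xi> = minf \<or> (\<exists>g\<in>KCp p. \<xi> = emb g \<and> (\<forall>H. D H + princ p g H \<ge> 0) \<and> pnorm p g \<le> r)"
  then show "\<xi> \<in> H0rho p D r" unfolding H0rho_def H0_def by blast
qed

lemma ultra_lin:
  assumes p: "prime p" and xy: "x \<in> Hp p" "y \<in> Hp p" and l: "l > 0"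
    and bx: "padic_abs p x / l \<le> r" and "padic_abs p y / l \<le> r" and b: "b = 1 \<or> b = -1"
  shows "padic_abs p (1 * x + b * y) / l \<le> r"
proof -
  have yb: "b * y \<in> Hp p" "padic_abs p (b * y) = padic_abs p y"
    using b Hp_uminus[OF xy(2)] padic_abs_uminus[OF p xy(2)] xy(2) by auto
  have "padic_abs p (x + b * y) \<le> max (padic_abs p x) (padic_abs p (b * y))"
    by (rule padic_abs_add[OF p xy(1) yb(1)])
  then have "padic_abs p (x + b * y) / l \<le> max (padic_abs p x) (padic_abs p y) / l"
    using l yb(2) by (intro divide_right_mono) auto
  also have "\<dots> \<le> r" using assms by (auto simp: max_def)
  finally show ?thesis by simp
qed

lemma comb_in:
  assumes p: "prime p" and g: "g \<in> KCp p" and f: "f \<in> KCp p" and b: "b = 1 \<or> b = -1"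
    and D: "\<forall>H. D H + princ p g H \<ge> 0" and ng: "pnorm p g \<le> r" and nf: "pnorm p f \<le> r"
  shows "(\<lambda>x. 1 * g x + b * f x) \<in> KCp p"
    and "\<forall>H. (D H - b * princ p f H) + princ p (\<lambda>x. 1 * g x + b * f x) H \<ge> 0"
    and "pnorm p (\<lambda>x. 1 * g x + b * f x) \<le> r"
proof -
  have bH: "b \<in> Hp p" using b Hp_1 Hp_uminus[OF Hp_1] by auto
  show k: "(\<lambda>x. 1 * g x + b * f x) \<in> KCp p" by (rule KCp_lc[OF p g f Hp_1 bH])
  show "\<forall>H. (D H - b * princ p f H) + princ p (\<lambda>x. 1 * g x + b * f x) H \<ge> 0"
  proof
    fix H
    have "princ p (\<lambda>x. 1 * g x + b * f x) H = 1 * princ p g H + b * princ p f H" by (rule princ_lc[OF g f])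
    then show "(D H - b * princ p f H) + princ p (\<lambda>x. 1 * g x + b * f x) H \<ge> 0" using D by simp
  qed
  have "\<forall>l>0. padic_abs p (left_slope (\<lambda>x. 1 * g x + b * f x) l) / l \<le> r \<and>
            padic_abs p (right_slope (\<lambda>x. 1 * g x + b * f x) l) / l \<le> r"
  proof (intro allI impI conjI)
    fix l :: real assume l: "l > 0"
    have G: "padic_abs p (left_slope g l) / l \<le> r" "padic_abs p (right_slope g l) / l \<le> r"
      using ng pnorm_le_iff[OF p g] l by auto
    have Fb: "padic_abs p (left_slope f l) / l \<le> r" "padic_abs p (right_slope f l) / l \<le> r"
      using nf pnorm_le_iff[OF p f] l by auto
    show "padic_abs p (left_slope (\<lambda>x. 1 * g x + b * f x) l) / l \<le> r"
      unfolding left_slope_lc[OF g f l]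
      by (rule ultra_lin[OF p left_slope_Hp[OF g l] left_slope_Hp[OF f l] l G(1) Fb(1) b])
    show "padic_abs p (right_slope (\<lambda>x. 1 * g x + b * f x) l) / l \<le> r"
      unfolding right_slope_lc[OF g f l]
      by (rule ultra_lin[OF p right_slope_Hp[OF g l] right_slope_Hp[OF f l] l G(2) Fb(2) b])
  qed
  then show "pnorm p (\<lambda>x. 1 * g x + b * f x) \<le> r" using pnorm_le_iff[OF p k] by blast
qed

lemma part1:
  assumes p: "prime p" and f: "f \<in> KCp p" and nf: "pnorm p f \<le> r"
  shows "bij_betw (\<lambda>\<xi> x. \<xi> x - ereal (f x)) (H0rho p D r) (H0rho p (\<lambda>H. D H + princ p f H) r)"
proof (rule bij_betw_byWitness[where f' = "\<lambda>\<xi> x. \<xi> x + ereal (f x)"])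
  show "\<forall>a\<in>H0rho p D r. (\<lambda>x. a x - ereal (f x) + ereal (f x)) = a"
    by (simp add: er_minus_plus)
  show "\<forall>a\<in>H0rho p (\<lambda>H. D H + princ p f H) r. (\<lambda>x. a x + ereal (f x) - ereal (f x)) = a"
    by (simp add: er_plus_minus2)
  show "(\<lambda>\<xi> x. \<xi> x - ereal (f x)) ` H0rho p D r \<subseteq> H0rho p (\<lambda>H. D H + princ p f H) r"
  proof
    fix \<zeta> assume "\<zeta> \<in> (\<lambda>\<xi> x. \<xi> x - ereal (f x)) ` H0rho p D r"
    then obtain \<xi> where \<xi>: "\<xi> \<in> H0rho p D r" "\<zeta> = (\<lambda>x. \<xi> x - ereal (f x))" by blast
    from \<xi>(1)[unfolded H0rho_iff]
    show "\<zeta> \<in> H0rho p (\<lambda>H. D H + princ p f H) r"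
    proof
      assume "\<xi> = minf"
      then have "\<zeta> = minf" using \<xi>(2) by (simp add: minf_def)
      then show ?thesis unfolding H0rho_iff by simp
    next
      assume "\<exists>g\<in>KCp p. \<xi> = emb g \<and> (\<forall>H. D H + princ p g H \<ge> 0) \<and> pnorm p g \<le> r"
      then obtain g where g: "g \<in> KCp p" "\<xi> = emb g" "\<forall>H. D H + princ p g H \<ge> 0" "pnorm p g \<le> r" by blast
      note c = comb_in[OF p g(1) f _ g(3) g(4) nf, of "-1"]
      have "\<zeta> = emb (\<lambda>x. 1 * g x + (-1) * f x)" unfolding \<xi>(2) g(2) emb_def by (rule ext) simp
      moreover have "\<forall>H. (D H + princ p f H) + princ p (\<lambda>x. 1 * g x + (-1) * f x) H \<ge> 0"
        using c(2) by simp
      ultimately show ?thesis unfolding H0rho_iff using c(1,3) by blast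
    qed
  qed
  show "(\<lambda>\<xi> x. \<xi> x + ereal (f x)) ` H0rho p (\<lambda>H. D H + princ p f H) r \<subseteq> H0rho p D r"
  proof
    fix \<zeta> assume "\<zeta> \<in> (\<lambda>\<xi> x. \<xi> x + ereal (f x)) ` H0rho p (\<lambda>H. D H + princ p f H) r"
    then obtain \<xi> where \<xi>: "\<xi> \<in> H0rho p (\<lambda>H. D H + princ p f H) r" "\<zeta> = (\<lambda>x. \<xi> x + ereal (f x))" by blast
    from \<xi>(1)[unfolded H0rho_iff]
    show "\<zeta> \<in> H0rho p D r"
    proof
      assume "\<xi> = minf"
      then have "\<zeta> = minf" using \<xi>(2) by (simp add: minf_def)
      then show ?thesis unfolding H0rho_iff by simp
    next
      assume "\<exists>g\<in>KCp p. \<xi> = emb g \<and> (\<forall>H. (D H + princ p f H) + princ p g H \<ge> 0) \<and> pnorm p g \<le> r"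
      then obtain g where g: "g \<in> KCp p" "\<xi> = emb g" "\<forall>H. (D H + princ p f H) + princ p g H \<ge> 0" "pnorm p g \<le> r" by blast
      note c = comb_in[OF p g(1) f _ g(3) g(4) nf, of 1]
      have "\<zeta> = emb (\<lambda>x. 1 * g x + 1 * f x)" unfolding \<xi>(2) g(2) emb_def by (rule ext) simp
      moreover have "\<forall>H. D H + princ p (\<lambda>x. 1 * g x + 1 * f x) H \<ge> 0"
        using c(2) by simp
      ultimately show ?thesis unfolding H0rho_iff using c(1,3) by blast
    qed
  qed
qed



lemma fun_scale_eq: "(\<lambda>x. a * g x + 0 * g x) = (\<lambda>x. a * (g x::real))" by simp

lemma KCp_scale: "prime p \<Longrightarrow> g \<in> KCp p \<Longrightarrow> a \<in> Hp p \<Longrightarrow> (\<lambda>x. a * g x) \<in> KCp p"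
  using KCp_lc[of p g g a 0] Hp_0 by (simp only: fun_scale_eq)

lemma princ_scale: "g \<in> KCp p \<Longrightarrow> princ p (\<lambda>x. a * g x) H = a * princ p g H"
  using princ_lc[of g p g a 0 H] by (simp only: fun_scale_eq)

lemma left_slope_scale: "g \<in> KCp p \<Longrightarrow> l > 0 \<Longrightarrow> left_slope (\<lambda>x. a * g x) l = a * left_slope g l"
  using left_slope_lc[of g p g l a 0] by (simp only: fun_scale_eq)

lemma right_slope_scale: "g \<in> KCp p \<Longrightarrow> l > 0 \<Longrightarrow> right_slope (\<lambda>x. a * g x) l = a * right_slope g l"
  using right_slope_lc[of g p g l a 0] by (simp only: fun_scale_eq)

lemma part2_bij:
  assumes p: "prime p"
  shows "bij_betw (\<lambda>\<xi> x. ereal (real p ^ n) * \<xi> x) (H0rho p D (real p ^ n)) (H0rho p (\<lambda>H. real p ^ n * D H) 1)"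
proof -
  define c where "c = real p ^ n"
  have c0: "c > 0" unfolding c_def using p prime_gt_0_nat by simp
  have cH: "c \<in> Hp p" "1 / c \<in> Hp p" unfolding c_def by (rule Hp_powp, rule Hp_inv_powp)
  have "bij_betw (\<lambda>\<xi> x. ereal c * \<xi> x) (H0rho p D c) (H0rho p (\<lambda>H. c * D H) 1)"
  proof (rule bij_betw_byWitness[where f' = "\<lambda>\<xi> x. ereal (1 / c) * \<xi> x"])
    show "\<forall>a\<in>H0rho p D c. (\<lambda>x. ereal (1 / c) * (ereal c * a x)) = a"
      using c0 by (simp add: er_mult_inv)
    show "\<forall>a\<in>H0rho p (\<lambda>H. c * D H) 1. (\<lambda>x. ereal c * (ereal (1 / c) * a x)) = a"
      using c0 by (simp only: er_mult_inv2) simp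
    show "(\<lambda>\<xi> x. ereal c * \<xi> x) ` H0rho p D c \<subseteq> H0rho p (\<lambda>H. c * D H) 1"
    proof
      fix \<zeta> assume "\<zeta> \<in> (\<lambda>\<xi> x. ereal c * \<xi> x) ` H0rho p D c"
      then obtain \<xi> where \<xi>: "\<xi> \<in> H0rho p D c" "\<zeta> = (\<lambda>x. ereal c * \<xi> x)" by blast
      from \<xi>(1)[unfolded H0rho_iff]
      show "\<zeta> \<in> H0rho p (\<lambda>H. c * D H) 1"
      proof
        assume "\<xi> = minf"
        then have "\<zeta> = minf" using \<xi>(2) c0 by (simp add: minf_def)
        then show ?thesis unfolding H0rho_iff by simp
      next
        assume "\<exists>g\<in>KCp p. \<xi> = emb g \<and> (\<forall>H. D H + princ p g H \<ge> 0) \<and> pnorm p g \<le> c"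
        then obtain g where g: "g \<in> KCp p" "\<xi> = emb g" "\<forall>H. D H + princ p g H \<ge> 0" "pnorm p g \<le> c" by blast
        have k: "(\<lambda>x. c * g x) \<in> KCp p" by (rule KCp_scale[OF p g(1) cH(1)])
        have "\<zeta> = emb (\<lambda>x. c * g x)" unfolding \<xi>(2) g(2) emb_def by (rule ext) (use c0 in auto)
        moreover have "\<forall>H. c * D H + princ p (\<lambda>x. c * g x) H \<ge> 0"
        proof
          fix H
          have "c * D H + princ p (\<lambda>x. c * g x) H = c * (D H + princ p g H)"
            using princ_scale[OF g(1)] by (simp add: algebra_simps)
          then show "c * D H + princ p (\<lambda>x. c * g x) H \<ge> 0" using g(3) c0 by simp
        qed
        moreover have "pnorm p (\<lambda>x. c * g x) \<le> 1"
          unfolding pnorm_le_iff[OF p k]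
        proof (intro allI impI conjI)
          fix l :: real assume l: "l > 0"
          have G: "padic_abs p (left_slope g l) / l \<le> c" "padic_abs p (right_slope g l) / l \<le> c"
            using g(4) pnorm_le_iff[OF p g(1)] l by auto
          have "padic_abs p (left_slope (\<lambda>x. c * g x) l) / l = (padic_abs p (left_slope g l) / l) / c"
            unfolding left_slope_scale[OF g(1) l] c_def padic_abs_mulpn[OF p left_slope_Hp[OF g(1) l]] by simp
          also have "\<dots> \<le> c / c" using G(1) c0 by (intro divide_right_mono) auto
          finally show "padic_abs p (left_slope (\<lambda>x. c * g x) l) / l \<le> 1" using c0 by simp
          have "padic_abs p (right_slope (\<lambda>x. c * g x) l) / l = (padic_abs p (right_slope g l) / l) / c"
            unfolding right_slope_scale[OF g(1) l] c_def padic_abs_mulpn[OF p right_slope_Hp[OF g(1) l]] by simp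
          also have "\<dots> \<le> c / c" using G(2) c0 by (intro divide_right_mono) auto
          finally show "padic_abs p (right_slope (\<lambda>x. c * g x) l) / l \<le> 1" using c0 by simp
        qed
        ultimately show ?thesis unfolding H0rho_iff using k by blast
      qed
    qed
    show "(\<lambda>\<xi> x. ereal (1 / c) * \<xi> x) ` H0rho p (\<lambda>H. c * D H) 1 \<subseteq> H0rho p D c"
    proof
      fix \<zeta> assume "\<zeta> \<in> (\<lambda>\<xi> x. ereal (1 / c) * \<xi> x) ` H0rho p (\<lambda>H. c * D H) 1"
      then obtain \<xi> where \<xi>: "\<xi> \<in> H0rho p (\<lambda>H. c * D H) 1" "\<zeta> = (\<lambda>x. ereal (1 / c) * \<xi> x)" by blast
      from \<xi>(1)[unfolded H0rho_iff]
      show "\<zeta> \<in> H0rho p D c"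
      proof
        assume "\<xi> = minf"
        then have "\<zeta> = minf" using \<xi>(2) c0 by (simp add: minf_def)
        then show ?thesis unfolding H0rho_iff by simp
      next
        assume "\<exists>g\<in>KCp p. \<xi> = emb g \<and> (\<forall>H. c * D H + princ p g H \<ge> 0) \<and> pnorm p g \<le> 1"
        then obtain g where g: "g \<in> KCp p" "\<xi> = emb g" "\<forall>H. c * D H + princ p g H \<ge> 0" "pnorm p g \<le> 1" by blast
        have k: "(\<lambda>x. (1 / c) * g x) \<in> KCp p" by (rule KCp_scale[OF p g(1) cH(2)])
        have "\<zeta> = emb (\<lambda>x. (1 / c) * g x)" unfolding \<xi>(2) g(2) emb_def by (rule ext) (use c0 in auto)
        moreover have "\<forall>H. D H + princ p (\<lambda>x. (1 / c) * g x) H \<ge> 0"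
        proof
          fix H
          have e: "princ p (\<lambda>x. (1 / c) * g x) H = (1 / c) * princ p g H" by (rule princ_scale[OF g(1)])
          have "D H + princ p (\<lambda>x. (1 / c) * g x) H = (1 / c) * (c * D H + princ p g H)"
            unfolding e using c0 by (simp add: field_simps)
          then show "D H + princ p (\<lambda>x. (1 / c) * g x) H \<ge> 0" using g(3) c0 by simp
        qed
        moreover have "pnorm p (\<lambda>x. (1 / c) * g x) \<le> c"
          unfolding pnorm_le_iff[OF p k]
        proof (intro allI impI conjI)
          fix l :: real assume l: "l > 0"
          have G: "padic_abs p (left_slope g l) / l \<le> 1" "padic_abs p (right_slope g l) / l \<le> 1"
            using g(4) pnorm_le_iff[OF p g(1)] l by auto
          have "(1 / c) * left_slope g l = left_slope g l / real p ^ n" unfolding c_def by simp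
          then have "padic_abs p (left_slope (\<lambda>x. (1 / c) * g x) l) / l = c * (padic_abs p (left_slope g l) / l)"
            unfolding left_slope_scale[OF g(1) l] using padic_abs_divpn[OF p left_slope_Hp[OF g(1) l], of n]
            by (simp add: c_def)
          also have "\<dots> \<le> c * 1" using G(1) c0 by (intro mult_left_mono) auto
          finally show "padic_abs p (left_slope (\<lambda>x. (1 / c) * g x) l) / l \<le> c" by simp
          have "(1 / c) * right_slope g l = right_slope g l / real p ^ n" unfolding c_def by simp
          then have "padic_abs p (right_slope (\<lambda>x. (1 / c) * g x) l) / l = c * (padic_abs p (right_slope g l) / l)"
            unfolding right_slope_scale[OF g(1) l] using padic_abs_divpn[OF p right_slope_Hp[OF g(1) l], of n]
            by (simp add: c_def)
          also have "\<dots> \<le> c * 1" using G(2) c0 by (intro mult_left_mono) auto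
          finally show "padic_abs p (right_slope (\<lambda>x. (1 / c) * g x) l) / l \<le> c" by simp
        qed
        ultimately show ?thesis unfolding H0rho_iff using k by blast
      qed
    qed
  qed
  then show ?thesis unfolding c_def .
qed



theorem lemma5p18:
  fixes p :: nat and D :: "real set \<Rightarrow> real" and f :: "real \<Rightarrow> real"
  assumes "prime p" and "is_Div p D" and "f \<in> KCp p"
  shows "(\<forall>n::nat. pnorm p f \<le> real p ^ n \<longrightarrow>
            (let \<phi> = (\<lambda>\<xi> x. \<xi> x - ereal (f x));
                 A = H0rho p D (real p ^ n) in
              bij_betw \<phi> A (H0rho p (\<lambda>H. D H + princ p f H) (real p ^ n)) \<and>
              (\<forall>\<xi>\<in>A. \<forall>\<eta>\<in>A. \<phi> (sup \<xi> \<eta>) = sup (\<phi> \<xi>) (\<phi> \<eta>)) \<and>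
              (\<forall>\<xi>\<in>A. \<forall>a::ereal. a \<noteq> \<infinity> \<longrightarrow> \<phi> (\<lambda>x. \<xi> x + a) = (\<lambda>x. \<phi> \<xi> x + a))))
       \<and> (\<forall>n::nat.
            (let F = (\<lambda>\<xi> x. ereal (real p ^ n) * \<xi> x);
                 A = H0rho p D (real p ^ n);
                 B = H0rho p (\<lambda>H. real p ^ n * D H) 1 in
              bij_betw F A B \<and>
              (\<forall>\<xi>\<in>A. \<forall>\<eta>\<in>A. F (sup \<xi> \<eta>) = sup (F \<xi>) (F \<eta>)) \<and>
              (\<forall>\<xi>\<in>A. \<forall>a::ereal. a \<noteq> \<infinity> \<longrightarrow>
                  F (\<lambda>x. \<xi> x + a) = (\<lambda>x. F \<xi> x + ereal (real p ^ n) * a)) \<and>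
              covering_dim (topH p A) = covering_dim (topH p B)))"
proof -
  have p: "prime p" by fact
  have f: "f \<in> KCp p" by fact
  have p0: "real p > 0" using p prime_gt_0_nat by simp
  have P1: "pnorm p f \<le> real p ^ n \<Longrightarrow>
            (let \<phi> = (\<lambda>\<xi> x. \<xi> x - ereal (f x));
                 A = H0rho p D (real p ^ n) in
              bij_betw \<phi> A (H0rho p (\<lambda>H. D H + princ p f H) (real p ^ n)) \<and>
              (\<forall>\<xi>\<in>A. \<forall>\<eta>\<in>A. \<phi> (sup \<xi> \<eta>) = sup (\<phi> \<xi>) (\<phi> \<eta>)) \<and>
              (\<forall>\<xi>\<in>A. \<forall>a::ereal. a \<noteq> \<infinity> \<longrightarrow> \<phi> (\<lambda>x. \<xi> x + a) = (\<lambda>x. \<phi> \<xi> x + a)))" for n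
  proof -
    assume nf: "pnorm p f \<le> real p ^ n"
    have b: "bij_betw (\<lambda>\<xi> x. \<xi> x - ereal (f x)) (H0rho p D (real p ^ n))
               (H0rho p (\<lambda>H. D H + princ p f H) (real p ^ n))" by (rule part1[OF p f nf])
    have s: "\<And>\<xi> \<eta>. (\<lambda>x. sup \<xi> \<eta> x - ereal (f x)) = sup (\<lambda>x. \<xi> x - ereal (f x)) (\<lambda>x. \<eta> x - ereal (f x))"
      by (rule ext) (simp only: sup_apply er_sup_minus)
    have t: "\<And>\<xi> a. a \<noteq> \<infinity> \<Longrightarrow> (\<lambda>x. \<xi> x + a - ereal (f x)) = (\<lambda>x. \<xi> x - ereal (f x) + a)"
      by (rule ext) (simp add: er_plus_minus)
    show ?thesis unfolding Let_def using b s t by blast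
  qed
  have P2: "let F = (\<lambda>\<xi> x. ereal (real p ^ n) * \<xi> x);
                 A = H0rho p D (real p ^ n);
                 B = H0rho p (\<lambda>H. real p ^ n * D H) 1 in
              bij_betw F A B \<and>
              (\<forall>\<xi>\<in>A. \<forall>\<eta>\<in>A. F (sup \<xi> \<eta>) = sup (F \<xi>) (F \<eta>)) \<and>
              (\<forall>\<xi>\<in>A. \<forall>a::ereal. a \<noteq> \<infinity> \<longrightarrow>
                  F (\<lambda>x. \<xi> x + a) = (\<lambda>x. F \<xi> x + ereal (real p ^ n) * a)) \<and>
              covering_dim (topH p A) = covering_dim (topH p B)" for n
  proof -
    define c where "c = real p ^ n"
    have c0: "c > 0" unfolding c_def using p0 by simp
    define A where "A = H0rho p D c"
    define B where "B = H0rho p (\<lambda>H. c * D H) 1"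
    have b: "bij_betw (\<lambda>\<xi> x. ereal c * \<xi> x) A B"
      unfolding A_def B_def c_def by (rule part2_bij[OF p])
    have s: "\<And>\<xi> \<eta>. (\<lambda>x. ereal c * sup \<xi> \<eta> x) = sup (\<lambda>x. ereal c * \<xi> x) (\<lambda>x. ereal c * \<eta> x)"
      by (rule ext) (simp only: sup_apply er_mult_sup[OF c0])
    have t: "\<And>\<xi> a. a \<noteq> \<infinity> \<Longrightarrow> (\<lambda>x. ereal c * (\<xi> x + a)) = (\<lambda>x. ereal c * \<xi> x + ereal c * a)"
      by (rule ext) (simp add: er_mult_plus[OF c0])
    have sc: "\<And>\<xi> \<eta> x. \<xi> \<in> A \<Longrightarrow> \<eta> \<in> A \<Longrightarrow>
        \<bar>ereal c * \<xi> x - ereal c * \<eta> x\<bar> = ereal c * \<bar>\<xi> x - \<eta> x\<bar>"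
      by (rule er_abs_scale[OF c0])
    have op: "openin (topH p A) U \<longleftrightarrow> openin (topH p B) ((\<lambda>\<xi> x. ereal c * \<xi> x) ` U)"
      if "U \<subseteq> topspace (topH p A)" for U
    proof -
      have "U \<subseteq> A" using that unfolding topH_space .
      then show ?thesis
      proof (rule topH_transfer[where F="\<lambda>\<xi> x. ereal c * \<xi> x" and A=A and B=B and c=c and U=U and p=p, rotated 3])
        show "bij_betw (\<lambda>\<xi> x. ereal c * \<xi> x) A B" by (rule b)
        show "0 < c" by (rule c0)
        fix \<xi> \<eta> :: "real \<Rightarrow> ereal" and x :: real
        show "\<bar>ereal c * \<xi> x - ereal c * \<eta> x\<bar> = ereal c * \<bar>\<xi> x - \<eta> x\<bar>" by (rule er_abs_scale[OF c0])
      qed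
    qed
    have bt: "bij_betw (\<lambda>\<xi> x. ereal c * \<xi> x) (topspace (topH p A)) (topspace (topH p B))"
      unfolding topH_space by (rule b)
    have cd: "covering_dim (topH p A) = covering_dim (topH p B)"
      by (rule covering_dim_transfer[OF bt op])
    show ?thesis unfolding Let_def using b s t cd unfolding A_def B_def c_def by blast
  qed
  show ?thesis using P1 P2 by blast
qed


end
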